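(* Let $H=-\frac{\hbar^2}{2}\Delta+V$ on $L^2(\mathbb R^d)$ with $V$ a smooth real potential such that all expressions below are defined. If $u(t)=u(\theta(t),q(t),p(t))$ is a McLachlan or Kramer--Saraceno solution on the frozen Gaussian manifold $\mathcal M$ (with $C^1$ parameters), then $$\dot q(t)=\frac{\hbar}{2\delta^2}p(t),\qquad \dot p(t)=-\frac\delta\hbar\langle u(t)\,|\,(\nabla V)u(t)\rangle .$$
   Context: Fix $\delta>0$, $\hbar>0$. $\mathcal M=\{u(\theta,q,p)\}$ with $u(\theta,q,p)(x)=(2\pi\delta^2)^{-d/4}\exp\big(i\theta-\frac{1}{4\delta^2}|x-2\delta q|^2+\frac i\delta p\cdot(x-\delta q)\big)$, $\theta\in\mathbb R$, $q,p\in\mathbb R^d$; $\mathcal T_u\mathcal M$ is the real span of the partial derivatives in $(\theta,q,p)$. A McLachlan (resp. Kramer--Saraceno) solution is a $C^1$ curve $u(t)\in\mathcal M\cap D(H)$ with $\dot u(t)\in\mathcal T_{u(t)}\mathcal M$ and $\mathrm{Re}\langle v|\dot u-\frac1{i\hbar}Hu\rangle=0$ (resp. $\mathrm{Im}\langle v|\dot u-\frac1{i\hbar}Hu\rangle=0$) for all $v\in\mathcal T_{u(t)}\mathcal M$. Inner products are antilinear in the first argument; $\langle u|(\nabla V)u\rangle\in\mathbb R^d$ is componentwise. *)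

theory Defs
  imports "HOL-Analysis.Analysis"
begin

text \<open>Euclidean space R^d is modelled by an arbitrary type 'a :: euclidean_space,
  d = DIM('a). Wave functions are functions 'a \<Rightarrow> complex.\<close>

definition gwp :: "real \<Rightarrow> real \<Rightarrow> 'a::euclidean_space \<Rightarrow> 'a \<Rightarrow> 'a \<Rightarrow> complex" where
  "gwp \<delta> \<theta> q p x =
     complex_of_real ((2 * pi * \<delta>\<^sup>2) powr (- real DIM('a) / 4)) *
     exp (\<i> * complex_of_real \<theta>
          - complex_of_real ((norm (x - (2 * \<delta>) *\<^sub>R q))\<^sup>2 / (4 * \<delta>\<^sup>2))
          + \<i> * complex_of_real ((p \<bullet> (x - \<delta> *\<^sub>R q)) / \<delta>))"

definition dtheta_gwp :: "real \<Rightarrow> real \<Rightarrow> 'a::euclidean_space \<Rightarrow> 'a \<Rightarrow> 'a \<Rightarrow> complex" where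
  "dtheta_gwp \<delta> \<theta> q p x = vector_derivative (\<lambda>s. gwp \<delta> (\<theta> + s) q p x) (at 0)"

definition dq_gwp :: "real \<Rightarrow> real \<Rightarrow> 'a::euclidean_space \<Rightarrow> 'a \<Rightarrow> 'a \<Rightarrow> 'a \<Rightarrow> complex" where
  "dq_gwp \<delta> \<theta> q p b x = vector_derivative (\<lambda>s. gwp \<delta> \<theta> (q + s *\<^sub>R b) p x) (at 0)"

definition dp_gwp :: "real \<Rightarrow> real \<Rightarrow> 'a::euclidean_space \<Rightarrow> 'a \<Rightarrow> 'a \<Rightarrow> 'a \<Rightarrow> complex" where
  "dp_gwp \<delta> \<theta> q p b x = vector_derivative (\<lambda>s. gwp \<delta> \<theta> q (p + s *\<^sub>R b) x) (at 0)"

definition tangent_space :: "real \<Rightarrow> real \<Rightarrow> 'a::euclidean_space \<Rightarrow> 'a \<Rightarrow> ('a \<Rightarrow> complex) set" where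
  "tangent_space \<delta> \<theta> q p =
     {f. \<exists>(c0::real) (cq::'a \<Rightarrow> real) (cp::'a \<Rightarrow> real).
           f = (\<lambda>x. complex_of_real c0 * dtheta_gwp \<delta> \<theta> q p x
                   + (\<Sum>b\<in>Basis. complex_of_real (cq b) * dq_gwp \<delta> \<theta> q p b x
                                 + complex_of_real (cp b) * dp_gwp \<delta> \<theta> q p b x))}"

definition l2_inner :: "('a::euclidean_space \<Rightarrow> complex) \<Rightarrow> ('a \<Rightarrow> complex) \<Rightarrow> complex" where
  "l2_inner f g = (LINT x|lborel. cnj (f x) * g x)"

definition dirderiv :: "'a::euclidean_space \<Rightarrow> ('a \<Rightarrow> 'b::real_normed_vector) \<Rightarrow> 'a \<Rightarrow> 'b" where
  "dirderiv b f x = vector_derivative (\<lambda>r. f (x + r *\<^sub>R b)) (at 0)"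

fun dirderivs :: "'a::euclidean_space list \<Rightarrow> ('a \<Rightarrow> 'b::real_normed_vector) \<Rightarrow> 'a \<Rightarrow> 'b" where
  "dirderivs [] f = f"
| "dirderivs (b # bs) f = dirderiv b (dirderivs bs f)"

definition smooth_fun :: "('a::euclidean_space \<Rightarrow> real) \<Rightarrow> bool" where
  "smooth_fun f \<longleftrightarrow>
     (\<forall>bs. set bs \<subseteq> Basis \<longrightarrow>
        continuous_on UNIV (dirderivs bs f) \<and>
        (\<forall>b\<in>Basis. \<forall>x. (\<lambda>r. dirderivs bs f (x + r *\<^sub>R b)) differentiable (at 0)))"

definition laplacian :: "('a::euclidean_space \<Rightarrow> complex) \<Rightarrow> 'a \<Rightarrow> complex" where
  "laplacian f x = (\<Sum>b\<in>Basis. dirderiv b (dirderiv b f) x)"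

definition hamiltonian :: "real \<Rightarrow> ('a::euclidean_space \<Rightarrow> real) \<Rightarrow> ('a \<Rightarrow> complex) \<Rightarrow> 'a \<Rightarrow> complex" where
  "hamiltonian hb V f x = - complex_of_real (hb\<^sup>2 / 2) * laplacian f x + complex_of_real (V x) * f x"

text \<open>Membership in D(H) for a smooth function: H f (computed pointwise) lies in L^2.\<close>
definition in_dom_H :: "real \<Rightarrow> ('a::euclidean_space \<Rightarrow> real) \<Rightarrow> ('a \<Rightarrow> complex) \<Rightarrow> bool" where
  "in_dom_H hb V f \<longleftrightarrow> integrable lborel (\<lambda>x. (cmod (hamiltonian hb V f x))\<^sup>2)"

definition gwp_curve :: "real \<Rightarrow> (real \<Rightarrow> real) \<Rightarrow> (real \<Rightarrow> 'a::euclidean_space) \<Rightarrow> (real \<Rightarrow> 'a) \<Rightarrow> real \<Rightarrow> 'a \<Rightarrow> complex" where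
  "gwp_curve \<delta> \<theta> q p t = gwp \<delta> (\<theta> t) (q t) (p t)"

definition time_deriv :: "(real \<Rightarrow> 'a \<Rightarrow> complex) \<Rightarrow> real \<Rightarrow> 'a \<Rightarrow> complex" where
  "time_deriv u t x = vector_derivative (\<lambda>s. u s x) (at t)"

definition McLachlan_sol :: "real \<Rightarrow> real \<Rightarrow> ('a::euclidean_space \<Rightarrow> real) \<Rightarrow> real set
     \<Rightarrow> (real \<Rightarrow> real) \<Rightarrow> (real \<Rightarrow> 'a) \<Rightarrow> (real \<Rightarrow> 'a) \<Rightarrow> bool" where
  "McLachlan_sol \<delta> hb V I \<theta> q p \<longleftrightarrow>
     (\<forall>t\<in>I. in_dom_H hb V (gwp_curve \<delta> \<theta> q p t) \<and>
        time_deriv (gwp_curve \<delta> \<theta> q p) t \<in> tangent_space \<delta> (\<theta> t) (q t) (p t) \<and>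
        (\<forall>v\<in>tangent_space \<delta> (\<theta> t) (q t) (p t).
           Re (l2_inner v (\<lambda>x. time_deriv (gwp_curve \<delta> \<theta> q p) t x
                 - hamiltonian hb V (gwp_curve \<delta> \<theta> q p t) x / (\<i> * complex_of_real hb))) = 0))"

definition KS_sol :: "real \<Rightarrow> real \<Rightarrow> ('a::euclidean_space \<Rightarrow> real) \<Rightarrow> real set
     \<Rightarrow> (real \<Rightarrow> real) \<Rightarrow> (real \<Rightarrow> 'a) \<Rightarrow> (real \<Rightarrow> 'a) \<Rightarrow> bool" where
  "KS_sol \<delta> hb V I \<theta> q p \<longleftrightarrow>
     (\<forall>t\<in>I. in_dom_H hb V (gwp_curve \<delta> \<theta> q p t) \<and>
        time_deriv (gwp_curve \<delta> \<theta> q p) t \<in> tangent_space \<delta> (\<theta> t) (q t) (p t) \<and>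
        (\<forall>v\<in>tangent_space \<delta> (\<theta> t) (q t) (p t).
           Im (l2_inner v (\<lambda>x. time_deriv (gwp_curve \<delta> \<theta> q p) t x
                 - hamiltonian hb V (gwp_curve \<delta> \<theta> q p t) x / (\<i> * complex_of_real hb))) = 0))"

end

theory Submission
  imports Defs "HOL-Probability.Distributions"
begin

lemma gwp_path_deriv:
  fixes qf pf xf :: "real \<Rightarrow> 'a::euclidean_space"
  assumes th: "(\<theta>f has_real_derivative \<theta>d) (at s)"
    and qq: "(qf has_vector_derivative qd) (at s)"
    and pp: "(pf has_vector_derivative pd) (at s)"
    and xx: "(xf has_vector_derivative xd) (at s)"
  shows "((\<lambda>s. gwp \<delta> (\<theta>f s) (qf s) (pf s) (xf s)) has_vector_derivative
     ((\<i> * complex_of_real \<theta>d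
       - complex_of_real (((xf s - (2*\<delta>) *\<^sub>R qf s) \<bullet> (xd - (2*\<delta>) *\<^sub>R qd)) / (2*\<delta>\<^sup>2))
       + \<i> * complex_of_real ((pd \<bullet> (xf s - \<delta> *\<^sub>R qf s) + pf s \<bullet> (xd - \<delta> *\<^sub>R qd)) / \<delta>))
      * gwp \<delta> (\<theta>f s) (qf s) (pf s) (xf s))) (at s)"
proof -
  define R where "R s = (norm (xf s - (2 * \<delta>) *\<^sub>R qf s))\<^sup>2 / (4 * \<delta>\<^sup>2)" for s
  define P where "P s = (pf s \<bullet> (xf s - \<delta> *\<^sub>R qf s)) / \<delta>" for s
  define E where "E s = \<i> * complex_of_real (\<theta>f s) - complex_of_real (R s) + \<i> * complex_of_real (P s)" for s
  define N where "N = complex_of_real ((2 * pi * \<delta>\<^sup>2) powr (- real DIM('a) / 4))"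
  have g: "gwp \<delta> (\<theta>f s) (qf s) (pf s) (xf s) = N * exp (E s)" for s
    unfolding gwp_def N_def E_def R_def P_def by simp
  have d1: "((\<lambda>s. xf s - (2 * \<delta>) *\<^sub>R qf s) has_vector_derivative (xd - (2*\<delta>) *\<^sub>R qd)) (at s)"
    using xx qq by (auto intro!: derivative_eq_intros)
  have d2: "((\<lambda>s. xf s - \<delta> *\<^sub>R qf s) has_vector_derivative (xd - \<delta> *\<^sub>R qd)) (at s)"
    using xx qq by (auto intro!: derivative_eq_intros)
  have dR: "(R has_real_derivative ((xf s - (2*\<delta>) *\<^sub>R qf s) \<bullet> (xd - (2*\<delta>) *\<^sub>R qd)) / (2*\<delta>\<^sup>2)) (at s)"
  proof -
    have "((\<lambda>s. (xf s - (2 * \<delta>) *\<^sub>R qf s) \<bullet> (xf s - (2 * \<delta>) *\<^sub>R qf s)) has_vector_derivative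
       ((xf s - (2 * \<delta>) *\<^sub>R qf s) \<bullet> (xd - (2*\<delta>) *\<^sub>R qd) + (xd - (2*\<delta>) *\<^sub>R qd) \<bullet> (xf s - (2 * \<delta>) *\<^sub>R qf s))) (at s)"
      by (rule bounded_bilinear.has_vector_derivative[OF bounded_bilinear_inner d1 d1])
    then have "((\<lambda>s. (xf s - (2 * \<delta>) *\<^sub>R qf s) \<bullet> (xf s - (2 * \<delta>) *\<^sub>R qf s) / (4*\<delta>\<^sup>2)) has_real_derivative
       ((xf s - (2 * \<delta>) *\<^sub>R qf s) \<bullet> (xd - (2*\<delta>) *\<^sub>R qd) + (xd - (2*\<delta>) *\<^sub>R qd) \<bullet> (xf s - (2 * \<delta>) *\<^sub>R qf s)) / (4*\<delta>\<^sup>2)) (at s)"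
      unfolding has_real_derivative_iff_has_vector_derivative
      by (rule has_vector_derivative_divide)
    then show ?thesis unfolding R_def power2_norm_eq_inner
      by (simp add: inner_commute[of "xd - _"] power2_eq_square)
  qed
  have dP: "(P has_real_derivative (pd \<bullet> (xf s - \<delta> *\<^sub>R qf s) + pf s \<bullet> (xd - \<delta> *\<^sub>R qd)) / \<delta>) (at s)"
  proof -
    have "((\<lambda>s. pf s \<bullet> (xf s - \<delta> *\<^sub>R qf s)) has_vector_derivative
       (pf s \<bullet> (xd - \<delta> *\<^sub>R qd) + pd \<bullet> (xf s - \<delta> *\<^sub>R qf s))) (at s)"
      by (rule bounded_bilinear.has_vector_derivative[OF bounded_bilinear_inner pp d2])
    then show ?thesis unfolding P_def has_real_derivative_iff_has_vector_derivative
      by (auto dest: has_vector_derivative_divide simp: add.commute)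
  qed
  have dE: "(E has_vector_derivative (\<i> * complex_of_real \<theta>d
       - complex_of_real (((xf s - (2*\<delta>) *\<^sub>R qf s) \<bullet> (xd - (2*\<delta>) *\<^sub>R qd)) / (2*\<delta>\<^sup>2))
       + \<i> * complex_of_real ((pd \<bullet> (xf s - \<delta> *\<^sub>R qf s) + pf s \<bullet> (xd - \<delta> *\<^sub>R qd)) / \<delta>))) (at s)"
    unfolding E_def[abs_def]
    by (intro has_vector_derivative_add has_vector_derivative_diff has_vector_derivative_mult_right
        has_vector_derivative_of_real th dR dP)
  note ch = field_vector_diff_chain_at[OF dE DERIV_exp]
  have "((\<lambda>s. N * exp (E s)) has_vector_derivative N * (ED * exp (E s))) (at s)" if "((exp \<circ> E) has_vector_derivative (ED * exp (E s))) (at s)" for ED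
    using has_vector_derivative_mult_right[OF that, of N] by (simp add: o_def)
  note this[OF ch]
  then show ?thesis unfolding g by (simp add: ac_simps)
qed

lemma gauss1_nn:
  assumes "\<sigma> > 0"
  shows "(\<integral>\<^sup>+s. ennreal (exp (- (s - m)\<^sup>2 / \<sigma>)) \<partial>lborel) = ennreal (sqrt (pi * \<sigma>))"
proof -
  define s0 where "s0 = sqrt (\<sigma> / 2)"
  have s0: "2 * s0\<^sup>2 = \<sigma>" using assms by (simp add: s0_def)
  have s0pos: "0 < s0" using assms by (simp add: s0_def)
  have s1: "sqrt 2 * \<bar>s0\<bar> = sqrt \<sigma>" using assms by (simp add: s0_def real_sqrt_mult[symmetric])
  have eq: "exp (- (s - m)\<^sup>2 / \<sigma>) = sqrt (pi * \<sigma>) * normal_density m s0 s" for s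
    unfolding normal_density_def s0[symmetric] using assms s0 s1
    by (simp add: real_sqrt_mult)
  have "(\<integral>\<^sup>+s. ennreal (exp (- (s - m)\<^sup>2 / \<sigma>)) \<partial>lborel)
      = (\<integral>\<^sup>+s. ennreal (sqrt (pi * \<sigma>)) * ennreal (normal_density m s0 s) \<partial>lborel)"
    by (intro nn_integral_cong) (unfold eq, rule ennreal_mult, use assms in auto)
  also have "\<dots> = ennreal (sqrt (pi * \<sigma>)) * (\<integral>\<^sup>+s. ennreal (normal_density m s0 s) \<partial>lborel)"
    by (rule nn_integral_cmult) (simp add: normal_density_def)
  also have "(\<integral>\<^sup>+s. ennreal (normal_density m s0 s) \<partial>lborel) = 1"
    using s0pos by (subst nn_integral_eq_integral) auto
  finally show ?thesis by simp
qed

lemma norm_sq_basis: "(norm (x::'a::euclidean_space))\<^sup>2 = (\<Sum>b\<in>Basis. (x \<bullet> b)\<^sup>2)"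
  by (subst power2_norm_eq_inner, subst euclidean_inner) (simp add: power2_eq_square)

lemma gauss_nn:
  fixes a :: "'a::euclidean_space"
  assumes "\<sigma> > 0"
  shows "(\<integral>\<^sup>+x. ennreal (exp (- (norm (x - a))\<^sup>2 / \<sigma>)) \<partial>lborel) = ennreal (sqrt (pi * \<sigma>) ^ DIM('a))"
proof -
  have eq: "ennreal (exp (- (norm (x - a))\<^sup>2 / \<sigma>)) = (\<Prod>b\<in>Basis. ennreal (exp (- (x \<bullet> b - a \<bullet> b)\<^sup>2 / \<sigma>)))" for x
  proof -
    have "exp (- (norm (x - a))\<^sup>2 / \<sigma>) = exp (\<Sum>b\<in>Basis. - (x \<bullet> b - a \<bullet> b)\<^sup>2 / \<sigma>)"
      by (simp add: norm_sq_basis sum_divide_distrib[symmetric] sum_negf inner_diff_left)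
    also have "\<dots> = (\<Prod>b\<in>Basis. exp (- (x \<bullet> b - a \<bullet> b)\<^sup>2 / \<sigma>))" by (rule exp_sum) simp
    finally show ?thesis by (simp add: prod_ennreal)
  qed
  have "(\<integral>\<^sup>+x. ennreal (exp (- (norm (x - a))\<^sup>2 / \<sigma>)) \<partial>lborel)
      = (\<integral>\<^sup>+x. (\<Prod>b\<in>Basis. ennreal (exp (- (x \<bullet> b - a \<bullet> b)\<^sup>2 / \<sigma>))) \<partial>lborel)"
    by (intro nn_integral_cong) (rule eq)
  also have "\<dots> = (\<Prod>b\<in>(Basis::'a set). (\<integral>\<^sup>+s. ennreal (exp (- (s - a \<bullet> b)\<^sup>2 / \<sigma>)) \<partial>lborel))"
    by (rule nn_integral_lborel_prod) auto
  also have "\<dots> = (\<Prod>b\<in>(Basis::'a set). ennreal (sqrt (pi * \<sigma>)))"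
    by (intro prod.cong refl) (rule gauss1_nn[OF assms])
  finally show ?thesis using assms by (simp add: prod_ennreal ennreal_power)
qed

lemma gauss_integrable:
  fixes a :: "'a::euclidean_space"
  assumes "\<sigma> > 0"
  shows "integrable lborel (\<lambda>x. exp (- (norm (x - a))\<^sup>2 / \<sigma>))"
  by (rule integrableI_nn_integral_finite[OF _ _ gauss_nn[OF assms]]) auto

lemma gauss_integral:
  fixes a :: "'a::euclidean_space"
  assumes "\<sigma> > 0"
  shows "integral\<^sup>L lborel (\<lambda>x. exp (- (norm (x - a))\<^sup>2 / \<sigma>)) = sqrt (pi * \<sigma>) ^ DIM('a)"
proof -
  have "0 \<le> integral\<^sup>L lborel (\<lambda>x. exp (- (norm (x - a))\<^sup>2 / \<sigma>))"
    by (intro integral_nonneg_AE) auto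
  moreover have "ennreal (integral\<^sup>L lborel (\<lambda>x. exp (- (norm (x - a))\<^sup>2 / \<sigma>))) = ennreal (sqrt (pi * \<sigma>) ^ DIM('a))"
    using nn_integral_eq_integral[OF gauss_integrable[OF assms, of a]] gauss_nn[OF assms, of a]
    by simp
  ultimately show ?thesis using assms by (subst (asm) ennreal_inj) auto
qed

definition pbd :: "'a::euclidean_space \<Rightarrow> ('a \<Rightarrow> 'b::real_normed_algebra_1) \<Rightarrow> bool" where
  "pbd a g \<longleftrightarrow> (\<exists>C n. \<forall>x. norm (g x) \<le> C * (1 + (norm (x - a))\<^sup>2) ^ n)"

lemma pbd_const[intro]: "pbd a (\<lambda>x. c)"
  unfolding pbd_def by (rule exI[of _ "norm c"], rule exI[of _ 0]) simp

lemma pw_mono: "n \<le> m \<Longrightarrow> (1 + (r::real)\<^sup>2) ^ n \<le> (1 + r\<^sup>2) ^ m"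
  by (rule power_increasing) auto

lemma pbd_add[intro]:
  assumes "pbd a f" "pbd a g" shows "pbd a (\<lambda>x. f x + g x)"
proof -
  obtain C1 n1 C2 n2 where 1: "\<And>x. norm (f x) \<le> C1 * (1 + (norm (x - a))\<^sup>2) ^ n1"
    and 2: "\<And>x. norm (g x) \<le> C2 * (1 + (norm (x - a))\<^sup>2) ^ n2"
    using assms unfolding pbd_def by blast
  have C1: "C1 \<ge> 0" using 1[of a] by (simp add: order_trans[OF norm_ge_zero])
  have C2: "C2 \<ge> 0" using 2[of a] by (simp add: order_trans[OF norm_ge_zero])
  show ?thesis unfolding pbd_def
  proof (intro exI allI)
    fix x
    have "norm (f x + g x) \<le> norm (f x) + norm (g x)" by (rule norm_triangle_ineq)
    also have "\<dots> \<le> C1 * (1 + (norm (x - a))\<^sup>2) ^ (n1 + n2) + C2 * (1 + (norm (x - a))\<^sup>2) ^ (n1 + n2)"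
    proof (rule add_mono)
      show "norm (f x) \<le> C1 * (1 + (norm (x - a))\<^sup>2) ^ (n1 + n2)"
        using 1[of x] mult_left_mono[OF pw_mono[of n1 "n1+n2" "norm (x - a)"] C1] by simp
      show "norm (g x) \<le> C2 * (1 + (norm (x - a))\<^sup>2) ^ (n1 + n2)"
        using 2[of x] mult_left_mono[OF pw_mono[of n2 "n1+n2" "norm (x - a)"] C2] by simp
    qed
    finally show "norm (f x + g x) \<le> (C1 + C2) * (1 + (norm (x - a))\<^sup>2) ^ (n1 + n2)"
      by (simp add: algebra_simps)
  qed
qed

lemma pbd_minus[intro]: "pbd a f \<Longrightarrow> pbd a (\<lambda>x. - f x)"
  unfolding pbd_def by simp

lemma pbd_diff[intro]: "pbd a f \<Longrightarrow> pbd a g \<Longrightarrow> pbd a (\<lambda>x. f x - g x)"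
  using pbd_add[of a f "\<lambda>x. - g x"] by auto

lemma pbd_mult[intro]:
  fixes f g :: "'a::euclidean_space \<Rightarrow> 'b::real_normed_algebra_1"
  assumes "pbd a f" "pbd a g" shows "pbd a (\<lambda>x. f x * g x)"
proof -
  obtain C1 n1 C2 n2 where 1: "\<And>x. norm (f x) \<le> C1 * (1 + (norm (x - a))\<^sup>2) ^ n1"
    and 2: "\<And>x. norm (g x) \<le> C2 * (1 + (norm (x - a))\<^sup>2) ^ n2"
    using assms unfolding pbd_def by blast
  show ?thesis unfolding pbd_def
  proof (intro exI allI)
    fix x
    have "norm (f x * g x) \<le> norm (f x) * norm (g x)" by (rule norm_mult_ineq)
    also have "\<dots> \<le> (C1 * (1 + (norm (x - a))\<^sup>2) ^ n1) * (C2 * (1 + (norm (x - a))\<^sup>2) ^ n2)"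
      by (rule mult_mono[OF 1 2]) (auto intro: order_trans[OF _ 1])
    finally show "norm (f x * g x) \<le> (C1 * C2) * (1 + (norm (x - a))\<^sup>2) ^ (n1 + n2)"
      by (simp add: power_add algebra_simps)
  qed
qed

lemma pbd_sum[intro]:
  fixes f :: "'i \<Rightarrow> 'a::euclidean_space \<Rightarrow> 'b::real_normed_algebra_1"
  shows "(\<And>i. i \<in> S \<Longrightarrow> pbd a (f i)) \<Longrightarrow> pbd a (\<lambda>x. \<Sum>i\<in>S. f i x)"
proof (induction S rule: infinite_finite_induct)
  case (insert i S) then show ?case by (simp add: pbd_add)
qed auto

lemma pbd_of_real[intro]: "pbd a f \<Longrightarrow> pbd a (\<lambda>x. of_real (f x))"
  unfolding pbd_def by simp

lemma le_1_sq: "(r::real) \<le> 1 + r\<^sup>2"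
proof -
  have "0 \<le> (r - 1/2)\<^sup>2" by simp
  then have "0 \<le> r*r - r + 1/4" by (simp add: power2_eq_square algebra_simps)
  then show ?thesis by (simp add: power2_eq_square)
qed

lemma pbd_inner[intro]:
  fixes a c v :: "'a::euclidean_space"
  shows "pbd a (\<lambda>x. (x - c) \<bullet> v)"
  unfolding pbd_def
proof (intro exI allI)
  fix x
  have "norm ((x - c) \<bullet> v) \<le> norm (x - c) * norm v" using Cauchy_Schwarz_ineq2[of "x - c" v] by simp
  also have "norm (x - c) \<le> norm (x - a) + norm (a - c)" by (metis diff_add_cancel norm_triangle_ineq add.commute diff_add_eq)
  also have "norm (x - a) \<le> 1 + (norm (x - a))\<^sup>2" by (rule le_1_sq)
  finally have "norm ((x - c) \<bullet> v) \<le> (1 + (norm (x - a))\<^sup>2 + norm (a - c)) * norm v"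
    by (simp add: mult_right_mono)
  also have "\<dots> \<le> ((1 + norm (a - c)) * norm v) * (1 + (norm (x - a))\<^sup>2) ^ 1"
    by (simp add: algebra_simps mult_right_mono)
  finally show "norm ((x - c) \<bullet> v) \<le> ((1 + norm (a - c)) * norm v) * (1 + (norm (x - a))\<^sup>2) ^ 1" .
qed

lemma pbd_inner'[intro]:
  fixes a c v :: "'a::euclidean_space"
  shows "pbd a (\<lambda>x. (x - c) \<bullet> v / k)"
  using pbd_mult[OF pbd_inner[of a c v] pbd_const[of a "1/k"]] by simp

lemma poly_exp_bound:
  fixes A \<sigma> :: real
  assumes "A \<ge> 0" "\<sigma> > 0"
  shows "(1 + A) ^ n * exp (- A / \<sigma>) \<le> (1 + 2*\<sigma>*n) ^ n * exp (- A / (2*\<sigma>))"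
proof -
  define m where "m = 1 + 2*\<sigma>*n"
  have m1: "m \<ge> 1" using assms by (simp add: m_def)
  have "1 + A \<le> m * (1 + A / m)" using m1 by (simp add: algebra_simps)
  also have "1 + A / m \<le> exp (A / m)" by (rule exp_ge_add_one_self_aux) (use assms m1 in auto)
  finally have "1 + A \<le> m * exp (A / m)" using m1 by (simp add: mult_left_mono)
  then have "(1 + A) ^ n \<le> (m * exp (A / m)) ^ n" by (rule power_mono) (use assms in auto)
  also have "\<dots> = m ^ n * exp (n * (A / m))" by (simp only: power_mult_distrib exp_of_nat_mult)
  also have "exp (n * (A / m)) \<le> exp (A / (2*\<sigma>))"
  proof -
    have "n * (A / m) \<le> A / (2*\<sigma>)"
    proof -
      have "n * A * (2*\<sigma>) \<le> A * m" using assms by (simp add: m_def algebra_simps)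
      then show ?thesis using assms m1 by (simp add: field_simps)
    qed
    then show ?thesis by simp
  qed
  finally have "(1 + A) ^ n \<le> m ^ n * exp (A / (2*\<sigma>))" using m1 by (simp add: mult_left_mono)
  then have "(1 + A) ^ n * exp (- A / \<sigma>) \<le> m ^ n * exp (A / (2*\<sigma>)) * exp (- A / \<sigma>)"
    by (rule mult_right_mono) simp
  also have "\<dots> = m ^ n * exp (- A / (2*\<sigma>))"
    using assms by (simp add: mult.assoc exp_add[symmetric] field_simps)
  finally show ?thesis by (simp add: m_def)
qed

lemma pbd_gauss_integrable:
  fixes g :: "'a::euclidean_space \<Rightarrow> 'b::{real_normed_algebra_1, banach, second_countable_topology}"
  assumes "pbd a g" "g \<in> borel_measurable lborel" "\<sigma> > 0"
  shows "integrable lborel (\<lambda>x. exp (- (norm (x - a))\<^sup>2 / \<sigma>) *\<^sub>R g x)"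
proof -
  obtain C n where 1: "\<And>x. norm (g x) \<le> C * (1 + (norm (x - a))\<^sup>2) ^ n"
    using assms unfolding pbd_def by blast
  have C: "C \<ge> 0" using 1[of a] by (simp add: order_trans[OF norm_ge_zero])
  show ?thesis
  proof (rule Bochner_Integration.integrable_bound)
    show "integrable lborel (\<lambda>x. (C * (1 + 2*\<sigma>*n) ^ n) * exp (- (norm (x - a))\<^sup>2 / (2*\<sigma>)))"
      using gauss_integrable[of "2*\<sigma>" a] assms by simp
    show "(\<lambda>x. exp (- (norm (x - a))\<^sup>2 / \<sigma>) *\<^sub>R g x) \<in> borel_measurable lborel"
      using assms(2) by measurable
    show "AE x in lborel. norm (exp (- (norm (x - a))\<^sup>2 / \<sigma>) *\<^sub>R g x)
            \<le> norm ((C * (1 + 2*\<sigma>*n) ^ n) * exp (- (norm (x - a))\<^sup>2 / (2*\<sigma>)))"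
    proof (intro AE_I2)
      fix x
      have "norm (exp (- (norm (x - a))\<^sup>2 / \<sigma>) *\<^sub>R g x) = exp (- (norm (x - a))\<^sup>2 / \<sigma>) * norm (g x)"
        by simp
      also have "\<dots> \<le> exp (- (norm (x - a))\<^sup>2 / \<sigma>) * (C * (1 + (norm (x - a))\<^sup>2) ^ n)"
        by (rule mult_left_mono[OF 1]) simp
      also have "\<dots> = C * ((1 + (norm (x - a))\<^sup>2) ^ n * exp (- (norm (x - a))\<^sup>2 / \<sigma>))" by simp
      also have "\<dots> \<le> C * ((1 + 2*\<sigma>*n) ^ n * exp (- (norm (x - a))\<^sup>2 / (2*\<sigma>)))"
        by (rule mult_left_mono[OF poly_exp_bound C]) (use assms in auto)
      finally show "norm (exp (- (norm (x - a))\<^sup>2 / \<sigma>) *\<^sub>R g x)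
            \<le> norm ((C * (1 + 2*\<sigma>*n) ^ n) * exp (- (norm (x - a))\<^sup>2 / (2*\<sigma>)))"
        using C assms by (simp add: mult.assoc)
    qed
  qed
qed

lemma lborel_translate_integral:
  fixes f :: "'a::euclidean_space \<Rightarrow> real"
  assumes "f \<in> borel_measurable lborel"
  shows "integral\<^sup>L lborel (\<lambda>x. f (v + x)) = integral\<^sup>L lborel f"
proof -
  have "integral\<^sup>L (distr lborel borel ((+) v)) f = integral\<^sup>L lborel (\<lambda>x. f (v + x))"
    using assms by (intro integral_distr) auto
  then show ?thesis by (simp add: lborel_distr_plus)
qed

lemma lborel_translate_integrable:
  fixes f :: "'a::euclidean_space \<Rightarrow> real"
  assumes "integrable lborel f"
  shows "integrable lborel (\<lambda>x. f (v + x))"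
proof -
  have "integrable (distr lborel borel ((+) v)) f" by (simp add: lborel_distr_plus assms)
  then show ?thesis
    by (subst (asm) integrable_distr_eq) (use assms in auto)
qed

lemma lborel_translate_nn_integral:
  fixes f :: "'a::euclidean_space \<Rightarrow> ennreal"
  assumes "f \<in> borel_measurable lborel"
  shows "(\<integral>\<^sup>+x. f (v + x) \<partial>lborel) = integral\<^sup>N lborel f"
proof -
  have "integral\<^sup>N (distr lborel borel ((+) v)) f = (\<integral>\<^sup>+x. f (v + x) \<partial>lborel)"
    using assms by (intro nn_integral_distr) auto
  then show ?thesis by (simp add: lborel_distr_plus)
qed

lemma ibp:
  fixes \<phi> \<phi>' :: "'a::euclidean_space \<Rightarrow> real" and c :: 'a
  assumes der: "\<And>x. ((\<lambda>r. \<phi> (x + r *\<^sub>R c)) has_real_derivative \<phi>' x) (at 0)"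
    and cont: "continuous_on UNIV \<phi>'"
    and int1: "integrable lborel \<phi>" and int2: "integrable lborel \<phi>'"
  shows "integral\<^sup>L lborel \<phi>' = 0"
proof -
  interpret P: pair_sigma_finite "lborel::'a measure" "lborel::real measure" ..
  have meas'[measurable]: "\<phi>' \<in> borel_measurable borel"
    by (rule borel_measurable_continuous_onI[OF cont])
  have meas[measurable]: "\<phi> \<in> borel_measurable lborel" using int1 by auto
  have der2: "((\<lambda>s. \<phi> (x + s *\<^sub>R c)) has_real_derivative \<phi>' (x + s *\<^sub>R c)) (at s)" for x s
  proof -
    have "((\<lambda>r. \<phi> ((x + s *\<^sub>R c) + r *\<^sub>R c)) has_real_derivative \<phi>' (x + s *\<^sub>R c)) (at 0)"
      by (rule der)
    then have "((\<lambda>r. (\<lambda>s. \<phi> (x + s *\<^sub>R c)) (r + s)) has_real_derivative \<phi>' (x + s *\<^sub>R c)) (at 0)"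
      by (simp add: scaleR_add_left add_ac)
    then show ?thesis using DERIV_shift[of "\<lambda>s. \<phi> (x + s *\<^sub>R c)" _ 0 s] by simp
  qed
  have contc: "continuous_on A (\<lambda>s. \<phi>' (x + s *\<^sub>R c))" for x A
    by (intro continuous_on_compose2[OF cont]) (auto intro!: continuous_intros)
  have ftc: "integral\<^sup>L lborel (\<lambda>s. indicator {0..1} s *\<^sub>R \<phi>' (x + s *\<^sub>R c)) = \<phi> (x + 1 *\<^sub>R c) - \<phi> (x + 0 *\<^sub>R c)" for x
    by (rule integral_FTC_atLeastAtMost[where F="\<lambda>s. \<phi> (x + s *\<^sub>R c)"])
       (auto intro!: contc DERIV_subset[OF der2] simp: has_real_derivative_iff_has_vector_derivative[symmetric])
  define F where "F z = indicator {0..1} (snd z) *\<^sub>R \<phi>' (fst z + snd z *\<^sub>R c)" for z :: "'a \<times> real"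
  have Fm[measurable]: "F \<in> borel_measurable (lborel \<Otimes>\<^sub>M lborel)"
    unfolding F_def by measurable
  have nnF: "(\<integral>\<^sup>+z. ennreal (norm (F z)) \<partial>(lborel \<Otimes>\<^sub>M lborel)) = (\<integral>\<^sup>+x. ennreal (norm (\<phi>' x)) \<partial>lborel)"
  proof -
    have inner: "(\<integral>\<^sup>+x. ennreal (norm (F (x, s))) \<partial>lborel)
          = indicator {0..1} s * (\<integral>\<^sup>+x. ennreal (norm (\<phi>' x)) \<partial>lborel)" for s :: real
    proof -
      have "(\<integral>\<^sup>+x. ennreal (norm (F (x, s))) \<partial>lborel)
          = (\<integral>\<^sup>+x. indicator {0..1} s * ennreal (norm (\<phi>' (s *\<^sub>R c + x))) \<partial>lborel)"
        by (intro nn_integral_cong) (auto simp: F_def add.commute split: split_indicator)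
      also have "\<dots> = indicator {0..1} s * (\<integral>\<^sup>+x. ennreal (norm (\<phi>' (s *\<^sub>R c + x))) \<partial>lborel)"
        by (rule nn_integral_cmult) measurable
      also have "(\<integral>\<^sup>+x. ennreal (norm (\<phi>' (s *\<^sub>R c + x))) \<partial>lborel) = (\<integral>\<^sup>+x. ennreal (norm (\<phi>' x)) \<partial>lborel)"
        by (rule lborel_translate_nn_integral[where f="\<lambda>x. ennreal (norm (\<phi>' x))"]) measurable
      finally show ?thesis .
    qed
    have "(\<integral>\<^sup>+z. ennreal (norm (F z)) \<partial>(lborel \<Otimes>\<^sub>M lborel))
        = (\<integral>\<^sup>+s. (\<integral>\<^sup>+x. ennreal (norm (F (x, s))) \<partial>lborel) \<partial>lborel)"
      by (rule lborel_pair.nn_integral_snd[symmetric]) measurable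
    also have "\<dots> = (\<integral>\<^sup>+s. indicator {0..1::real} s * (\<integral>\<^sup>+x. ennreal (norm (\<phi>' x)) \<partial>lborel) \<partial>lborel)"
      by (simp only: inner)
    also have "\<dots> = (\<integral>\<^sup>+x. ennreal (norm (\<phi>' x)) \<partial>lborel)"
      by (subst mult.commute, subst nn_integral_cmult_indicator) auto
    finally show ?thesis .
  qed
  have Fint: "integrable (lborel \<Otimes>\<^sub>M lborel) F"
  proof (rule integrableI_bounded)
    show "F \<in> borel_measurable (lborel \<Otimes>\<^sub>M lborel)" by (rule Fm)
    show "(\<integral>\<^sup>+z. ennreal (norm (F z)) \<partial>(lborel \<Otimes>\<^sub>M lborel)) < \<infinity>"
      unfolding nnF using int2 by (simp add: integrable_iff_bounded)
  qed
  have "integral\<^sup>L (lborel \<Otimes>\<^sub>M lborel) F = (\<integral>x. (\<integral>s. F (x, s) \<partial>lborel) \<partial>lborel)"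
    by (rule lborel_pair.integral_fst'[OF Fint, symmetric])
  also have "\<dots> = (\<integral>x. \<phi> (c + x) - \<phi> x \<partial>lborel)"
  proof (intro Bochner_Integration.integral_cong refl)
    fix x
    have "(\<integral>s. F (x, s) \<partial>lborel) = \<phi> (x + 1 *\<^sub>R c) - \<phi> (x + 0 *\<^sub>R c)"
      unfolding ftc[of x, symmetric] F_def by simp
    then show "(\<integral>s. F (x, s) \<partial>lborel) = \<phi> (c + x) - \<phi> x" by (simp add: add.commute)
  qed
  also have "\<dots> = (\<integral>x. \<phi> (c + x) \<partial>lborel) - (\<integral>x. \<phi> x \<partial>lborel)"
    by (rule Bochner_Integration.integral_diff[OF lborel_translate_integrable[OF int1] int1])
  also have "\<dots> = 0" by (simp add: lborel_translate_integral[OF meas])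
  finally have 1: "integral\<^sup>L (lborel \<Otimes>\<^sub>M lborel) F = 0" .
  have "integral\<^sup>L (lborel \<Otimes>\<^sub>M lborel) F = (\<integral>s. (\<integral>x. F (x, s) \<partial>lborel) \<partial>lborel)"
    using lborel_pair.integral_snd[of "\<lambda>x s. F (x, s)"] Fint by simp
  also have "\<dots> = (\<integral>s. indicator {0..1::real} s *\<^sub>R integral\<^sup>L lborel \<phi>' \<partial>lborel)"
  proof (intro Bochner_Integration.integral_cong refl)
    fix s :: real
    have "(\<integral>x. F (x, s) \<partial>lborel) = (\<integral>x. indicator {0..1} s *\<^sub>R \<phi>' (s *\<^sub>R c + x) \<partial>lborel)"
      by (simp add: F_def add.commute)
    also have "\<dots> = indicator {0..1} s *\<^sub>R (\<integral>x. \<phi>' (s *\<^sub>R c + x) \<partial>lborel)"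
      by simp
    also have "(\<integral>x. \<phi>' (s *\<^sub>R c + x) \<partial>lborel) = integral\<^sup>L lborel \<phi>'"
      by (rule lborel_translate_integral) measurable
    finally show "(\<integral>x. F (x, s) \<partial>lborel) = indicator {0..1} s *\<^sub>R integral\<^sup>L lborel \<phi>'" .
  qed
  also have "\<dots> = integral\<^sup>L lborel \<phi>'"
    by simp
  finally show ?thesis using 1 by simp
qed

definition hfac :: "real \<Rightarrow> 'a::euclidean_space \<Rightarrow> 'a \<Rightarrow> 'a \<Rightarrow> 'a \<Rightarrow> complex" where
  "hfac \<delta> q p b x = complex_of_real (- (((x - (2*\<delta>) *\<^sub>R q) \<bullet> b) / (2*\<delta>\<^sup>2))) + \<i> * complex_of_real ((p \<bullet> b) / \<delta>)"

lemma dtheta_gwp_eq: "dtheta_gwp \<delta> \<theta> q p x = \<i> * gwp \<delta> \<theta> q p x"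
proof -
  have "((\<lambda>s. gwp \<delta> (\<theta> + s) q p x) has_vector_derivative
     ((\<i> * complex_of_real 1
       - complex_of_real (((x - (2*\<delta>) *\<^sub>R q) \<bullet> (0 - (2*\<delta>) *\<^sub>R 0)) / (2*\<delta>\<^sup>2))
       + \<i> * complex_of_real ((0 \<bullet> (x - \<delta> *\<^sub>R q) + p \<bullet> (0 - \<delta> *\<^sub>R 0)) / \<delta>))
      * gwp \<delta> (\<theta> + 0) q p x)) (at 0)"
    by (rule gwp_path_deriv[where qf="\<lambda>_. q" and pf="\<lambda>_. p" and xf="\<lambda>_. x"]) (auto intro!: derivative_eq_intros)
  then show ?thesis unfolding dtheta_gwp_def by (simp add: vector_derivative_at)
qed

lemma dq_gwp_eq:
  assumes "\<delta> \<noteq> 0"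
  shows "dq_gwp \<delta> \<theta> q p b x = (complex_of_real (((x - (2*\<delta>) *\<^sub>R q) \<bullet> b) / \<delta>) - \<i> * complex_of_real (p \<bullet> b)) * gwp \<delta> \<theta> q p x"
proof -
  have "((\<lambda>s. gwp \<delta> \<theta> (q + s *\<^sub>R b) p x) has_vector_derivative
     ((\<i> * complex_of_real 0
       - complex_of_real (((x - (2*\<delta>) *\<^sub>R (q + 0 *\<^sub>R b)) \<bullet> (0 - (2*\<delta>) *\<^sub>R b)) / (2*\<delta>\<^sup>2))
       + \<i> * complex_of_real ((0 \<bullet> (x - \<delta> *\<^sub>R (q + 0 *\<^sub>R b)) + p \<bullet> (0 - \<delta> *\<^sub>R b)) / \<delta>))
      * gwp \<delta> \<theta> (q + 0 *\<^sub>R b) p x)) (at 0)"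
    by (rule gwp_path_deriv[where \<theta>f="\<lambda>_. \<theta>" and pf="\<lambda>_. p" and xf="\<lambda>_. x"]) (auto intro!: derivative_eq_intros)
  moreover have "(\<i> * complex_of_real 0
       - complex_of_real (((x - (2*\<delta>) *\<^sub>R (q + 0 *\<^sub>R b)) \<bullet> (0 - (2*\<delta>) *\<^sub>R b)) / (2*\<delta>\<^sup>2))
       + \<i> * complex_of_real ((0 \<bullet> (x - \<delta> *\<^sub>R (q + 0 *\<^sub>R b)) + p \<bullet> (0 - \<delta> *\<^sub>R b)) / \<delta>))
     = complex_of_real (((x - (2*\<delta>) *\<^sub>R q) \<bullet> b) / \<delta>) - \<i> * complex_of_real (p \<bullet> b)"
    using assms by (simp add: power2_eq_square field_simps inner_simps)
  ultimately show ?thesis unfolding dq_gwp_def by (simp add: vector_derivative_at)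
qed

lemma dp_gwp_eq:
  assumes "\<delta> \<noteq> 0"
  shows "dp_gwp \<delta> \<theta> q p b x = (\<i> * complex_of_real ((b \<bullet> (x - \<delta> *\<^sub>R q)) / \<delta>)) * gwp \<delta> \<theta> q p x"
proof -
  have "((\<lambda>s. gwp \<delta> \<theta> q (p + s *\<^sub>R b) x) has_vector_derivative
     ((\<i> * complex_of_real 0
       - complex_of_real (((x - (2*\<delta>) *\<^sub>R q) \<bullet> (0 - (2*\<delta>) *\<^sub>R 0)) / (2*\<delta>\<^sup>2))
       + \<i> * complex_of_real ((b \<bullet> (x - \<delta> *\<^sub>R q) + (p + 0 *\<^sub>R b) \<bullet> (0 - \<delta> *\<^sub>R 0)) / \<delta>))
      * gwp \<delta> \<theta> q (p + 0 *\<^sub>R b) x)) (at 0)"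
    by (rule gwp_path_deriv[where \<theta>f="\<lambda>_. \<theta>" and qf="\<lambda>_. q" and xf="\<lambda>_. x"]) (auto intro!: derivative_eq_intros)
  then show ?thesis unfolding dp_gwp_def by (simp add: vector_derivative_at)
qed

lemma dirderiv_gwp_has:
  assumes "\<delta> \<noteq> 0"
  shows "((\<lambda>r. gwp \<delta> \<theta> q p (x + r *\<^sub>R b)) has_vector_derivative hfac \<delta> q p b x * gwp \<delta> \<theta> q p x) (at 0)"
proof -
  have "((\<lambda>r. gwp \<delta> \<theta> q p (x + r *\<^sub>R b)) has_vector_derivative
     ((\<i> * complex_of_real 0
       - complex_of_real (((x + 0 *\<^sub>R b - (2*\<delta>) *\<^sub>R q) \<bullet> (b - (2*\<delta>) *\<^sub>R 0)) / (2*\<delta>\<^sup>2))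
       + \<i> * complex_of_real ((0 \<bullet> (x + 0 *\<^sub>R b - \<delta> *\<^sub>R q) + p \<bullet> (b - \<delta> *\<^sub>R 0)) / \<delta>))
      * gwp \<delta> \<theta> q p (x + 0 *\<^sub>R b))) (at 0)"
    by (rule gwp_path_deriv[where \<theta>f="\<lambda>_. \<theta>" and qf="\<lambda>_. q" and pf="\<lambda>_. p"]) (auto intro!: derivative_eq_intros)
  then show ?thesis unfolding hfac_def by simp
qed

lemma dirderiv_gwp_eq:
  assumes "\<delta> \<noteq> 0"
  shows "dirderiv b (gwp \<delta> \<theta> q p) x = hfac \<delta> q p b x * gwp \<delta> \<theta> q p x"
  unfolding dirderiv_def by (rule vector_derivative_at[OF dirderiv_gwp_has[OF assms]])

lemma dirderiv2_gwp_eq: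
  assumes "\<delta> \<noteq> 0"
  shows "dirderiv b (dirderiv b (gwp \<delta> \<theta> q p)) x
     = ((hfac \<delta> q p b x)\<^sup>2 - complex_of_real ((b \<bullet> b) / (2*\<delta>\<^sup>2))) * gwp \<delta> \<theta> q p x"
proof -
  have h: "hfac \<delta> q p b (x + r *\<^sub>R b) = hfac \<delta> q p b x + complex_of_real (- (b \<bullet> b) / (2*\<delta>\<^sup>2)) * complex_of_real r" for r
    unfolding hfac_def by (simp add: inner_simps algebra_simps add_divide_distrib diff_divide_distrib)
  have dh: "((\<lambda>r. hfac \<delta> q p b (x + r *\<^sub>R b)) has_vector_derivative complex_of_real (- (b \<bullet> b) / (2*\<delta>\<^sup>2))) (at 0)"
    unfolding h by (auto intro!: derivative_eq_intros)
  have "((\<lambda>r. hfac \<delta> q p b (x + r *\<^sub>R b) * gwp \<delta> \<theta> q p (x + r *\<^sub>R b)) has_vector_derivative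
      (hfac \<delta> q p b (x + 0 *\<^sub>R b) * (hfac \<delta> q p b x * gwp \<delta> \<theta> q p x)
       + complex_of_real (- (b \<bullet> b) / (2*\<delta>\<^sup>2)) * gwp \<delta> \<theta> q p (x + 0 *\<^sub>R b))) (at 0)"
    by (rule has_vector_derivative_mult[OF dh dirderiv_gwp_has[OF assms]])
  then have "((\<lambda>r. dirderiv b (gwp \<delta> \<theta> q p) (x + r *\<^sub>R b)) has_vector_derivative
      ((hfac \<delta> q p b x)\<^sup>2 - complex_of_real ((b \<bullet> b) / (2*\<delta>\<^sup>2))) * gwp \<delta> \<theta> q p x) (at 0)"
    by (simp add: dirderiv_gwp_eq[OF assms] power2_eq_square algebra_simps)
  then show ?thesis unfolding dirderiv_def[of b "dirderiv b _"] by (simp add: vector_derivative_at)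
qed

lemma laplacian_gwp_eq:
  assumes "\<delta> \<noteq> 0"
  shows "laplacian (gwp \<delta> \<theta> q p) x
     = (\<Sum>b\<in>Basis. (hfac \<delta> q p b x)\<^sup>2 - complex_of_real (1 / (2*\<delta>\<^sup>2))) * gwp \<delta> \<theta> q p x"
  unfolding laplacian_def by (simp add: dirderiv2_gwp_eq[OF assms] sum_distrib_right)

definition rho :: "real \<Rightarrow> 'a::euclidean_space \<Rightarrow> 'a \<Rightarrow> real" where
  "rho \<delta> q x = ((2 * pi * \<delta>\<^sup>2) powr (- real DIM('a) / 4))\<^sup>2 * exp (- (norm (x - (2*\<delta>) *\<^sub>R q))\<^sup>2 / (2*\<delta>\<^sup>2))"

lemma gwp_sq: "cnj (gwp \<delta> \<theta> q p x) * gwp \<delta> \<theta> q p x = complex_of_real (rho \<delta> q x)"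
proof -
  define c where "c = (2 * pi * \<delta>\<^sup>2) powr (- real DIM('a) / 4)"
  define E where "E = \<i> * complex_of_real \<theta>
          - complex_of_real ((norm (x - (2 * \<delta>) *\<^sub>R q))\<^sup>2 / (4 * \<delta>\<^sup>2))
          + \<i> * complex_of_real ((p \<bullet> (x - \<delta> *\<^sub>R q)) / \<delta>)"
  have g: "gwp \<delta> \<theta> q p x = complex_of_real c * exp E" unfolding gwp_def c_def E_def ..
  have "cnj (gwp \<delta> \<theta> q p x) * gwp \<delta> \<theta> q p x = complex_of_real (c\<^sup>2) * exp (cnj E + E)"
    unfolding g by (simp add: exp_cnj[symmetric] exp_add power2_eq_square)
  also have "cnj E + E = complex_of_real (- (norm (x - (2*\<delta>) *\<^sub>R q))\<^sup>2 / (2*\<delta>\<^sup>2))"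
    unfolding E_def by (simp add: complex_eq_iff)
  finally show ?thesis unfolding rho_def c_def by (simp flip: exp_of_real)
qed

lemma norm_gwp_sq: "(norm (gwp \<delta> \<theta> q p x))\<^sup>2 = rho \<delta> q x"
proof -
  have "complex_of_real ((norm (gwp \<delta> \<theta> q p x))\<^sup>2) = cnj (gwp \<delta> \<theta> q p x) * gwp \<delta> \<theta> q p x"
    by (metis complex_norm_square of_real_power mult.commute)
  then have "complex_of_real ((norm (gwp \<delta> \<theta> q p x))\<^sup>2) = complex_of_real (rho \<delta> q x)"
    unfolding gwp_sq .
  then show ?thesis by (simp only: of_real_eq_iff)
qed

lemma rho_nonneg: "rho \<delta> q x \<ge> 0" unfolding rho_def by simp

lemma rho_pos: "\<delta> \<noteq> 0 \<Longrightarrow> rho \<delta> q x > 0" unfolding rho_def by simp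

lemma Re_hfac: "Re (hfac \<delta> q p b x) = - (((x - (2*\<delta>) *\<^sub>R q) \<bullet> b) / (2*\<delta>\<^sup>2))"
  unfolding hfac_def by simp
lemma Im_hfac: "Im (hfac \<delta> q p b x) = (p \<bullet> b) / \<delta>"
  unfolding hfac_def by simp

lemma sum_inner_basis: "(\<Sum>b\<in>Basis. (u \<bullet> b) * (v \<bullet> b)) = (u::'a::euclidean_space) \<bullet> v"
  by (simp add: euclidean_inner[of u v])

lemma Im_lap:
  assumes "\<delta> \<noteq> 0"
  shows "Im (\<Sum>b\<in>Basis. (hfac \<delta> q p b x)\<^sup>2 - complex_of_real (1 / (2*\<delta>\<^sup>2)))
        = - (((x - (2*\<delta>) *\<^sub>R q) \<bullet> p) / \<delta>^3)"
proof -
  have "Im (\<Sum>b\<in>Basis. (hfac \<delta> q p b x)\<^sup>2 - complex_of_real (1 / (2*\<delta>\<^sup>2)))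
      = (\<Sum>b\<in>(Basis::'a set). 2 * Re (hfac \<delta> q p b x) * Im (hfac \<delta> q p b x))"
    by (simp add: Im_sum power2_eq_square mult_ac)
  also have "\<dots> = (\<Sum>b\<in>(Basis::'a set). (- 1 / \<delta>^3) * (((x - (2*\<delta>) *\<^sub>R q) \<bullet> b) * (p \<bullet> b)))"
    using assms by (intro sum.cong refl) (simp add: Re_hfac Im_hfac power2_eq_square power3_eq_cube field_simps)
  also have "\<dots> = (- 1 / \<delta>^3) * ((x - (2*\<delta>) *\<^sub>R q) \<bullet> p)"
    by (simp only: sum_distrib_left[symmetric] sum_inner_basis)
  finally show ?thesis by simp
qed

lemma Re_lap:
  fixes x q p :: "'a::euclidean_space"
  assumes "\<delta> \<noteq> 0"
  shows "Re (\<Sum>b\<in>Basis. (hfac \<delta> q p b x)\<^sup>2 - complex_of_real (1 / (2*\<delta>\<^sup>2)))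
        = (norm (x - (2*\<delta>) *\<^sub>R q))\<^sup>2 / (4*\<delta>^4) - (norm p)\<^sup>2 / \<delta>\<^sup>2 - real DIM('a) / (2*\<delta>\<^sup>2)"
proof -
  have "Re (\<Sum>b\<in>Basis. (hfac \<delta> q p b x)\<^sup>2 - complex_of_real (1 / (2*\<delta>\<^sup>2)))
      = (\<Sum>b\<in>(Basis::'a set). (Re (hfac \<delta> q p b x))\<^sup>2 - (Im (hfac \<delta> q p b x))\<^sup>2 - 1 / (2*\<delta>\<^sup>2))"
    by (simp add: Re_sum power2_eq_square)
  also have "\<dots> = (\<Sum>b\<in>(Basis::'a set). (1 / (4*\<delta>^4)) * ((x - (2*\<delta>) *\<^sub>R q) \<bullet> b)\<^sup>2 - (1/\<delta>\<^sup>2) * (p \<bullet> b)\<^sup>2 - 1 / (2*\<delta>\<^sup>2))"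
    by (intro sum.cong refl) (simp add: Re_hfac Im_hfac power_divide power_mult_distrib flip: power_mult)
  also have "\<dots> = (1 / (4*\<delta>^4)) * (\<Sum>b\<in>(Basis::'a set). ((x - (2*\<delta>) *\<^sub>R q) \<bullet> b)\<^sup>2)
        - (1/\<delta>\<^sup>2) * (\<Sum>b\<in>(Basis::'a set). (p \<bullet> b)\<^sup>2) - real DIM('a) * (1 / (2*\<delta>\<^sup>2))"
    by (simp add: sum_subtractf sum_distrib_left)
  finally show ?thesis by (simp add: norm_sq_basis[symmetric])
qed

lemma sum_basis_cmult:
  fixes A v :: "'a::euclidean_space"
  shows "(\<Sum>b\<in>Basis. complex_of_real (A \<bullet> b) * complex_of_real (v \<bullet> b)) = complex_of_real (A \<bullet> v)"
proof -
  have "(\<Sum>b\<in>Basis. complex_of_real (A \<bullet> b) * complex_of_real (v \<bullet> b)) = complex_of_real (\<Sum>b\<in>Basis. (A \<bullet> b) * (v \<bullet> b))"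
    by (simp add: of_real_sum)
  then show ?thesis by (simp add: sum_inner_basis)
qed

lemma aux1: "d \<noteq> 0 \<Longrightarrow> complex_of_real (r / d) * u = complex_of_real c * (\<i> * u) + (complex_of_real r * complex_of_real (1/d) - \<i> * complex_of_real c) * u"
  by (simp add: field_simps)

lemma aux2: "d \<noteq> 0 \<Longrightarrow> \<i> * (complex_of_real ((R - d * c) / d) * u) = complex_of_real (- c) * (\<i> * u) + (\<i> * complex_of_real R * complex_of_real (1/d)) * u"
  by (simp add: field_simps)

lemma tan_R:
  assumes "\<delta> \<noteq> 0"
  shows "(\<lambda>x. complex_of_real (((x - (2*\<delta>) *\<^sub>R q) \<bullet> A) / \<delta>) * gwp \<delta> \<theta> q p x) \<in> tangent_space \<delta> \<theta> q p"
  unfolding tangent_space_def mem_Collect_eq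
proof (intro exI ext)
  fix x
  let ?u = "gwp \<delta> \<theta> q p x"
  have "(\<Sum>b\<in>Basis. complex_of_real (A \<bullet> b) * dq_gwp \<delta> \<theta> q p b x + complex_of_real 0 * dp_gwp \<delta> \<theta> q p b x)
     = (\<Sum>b\<in>Basis. (complex_of_real (A \<bullet> b) * complex_of_real ((x - (2*\<delta>) *\<^sub>R q) \<bullet> b) * complex_of_real (1/\<delta>)
          - \<i> * (complex_of_real (A \<bullet> b) * complex_of_real (p \<bullet> b))) * ?u)"
    using assms by (intro sum.cong refl) (simp add: dq_gwp_eq field_simps)
  also have "\<dots> = (complex_of_real (A \<bullet> (x - (2*\<delta>) *\<^sub>R q)) * complex_of_real (1/\<delta>) - \<i> * complex_of_real (A \<bullet> p)) * ?u"
    by (simp only: sum_distrib_right[symmetric] sum_subtractf sum_distrib_left[symmetric] sum_basis_cmult)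
  finally have S: "(\<Sum>b\<in>Basis. complex_of_real (A \<bullet> b) * dq_gwp \<delta> \<theta> q p b x + complex_of_real 0 * dp_gwp \<delta> \<theta> q p b x) = (complex_of_real (A \<bullet> (x - (2*\<delta>) *\<^sub>R q)) * complex_of_real (1/\<delta>) - \<i> * complex_of_real (A \<bullet> p)) * ?u" .
  show "complex_of_real (((x - (2*\<delta>) *\<^sub>R q) \<bullet> A) / \<delta>) * ?u =
    complex_of_real (A \<bullet> p) * dtheta_gwp \<delta> \<theta> q p x +
    (\<Sum>b\<in>Basis. complex_of_real (A \<bullet> b) * dq_gwp \<delta> \<theta> q p b x + complex_of_real 0 * dp_gwp \<delta> \<theta> q p b x)"
    unfolding S dtheta_gwp_eq inner_commute[of "x - (2*\<delta>) *\<^sub>R q" A] by (rule aux1[OF assms])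
qed

lemma tan_I:
  assumes "\<delta> \<noteq> 0"
  shows "(\<lambda>x. \<i> * (complex_of_real (((x - (2*\<delta>) *\<^sub>R q) \<bullet> A) / \<delta>) * gwp \<delta> \<theta> q p x)) \<in> tangent_space \<delta> \<theta> q p"
  unfolding tangent_space_def mem_Collect_eq
proof (intro exI ext)
  fix x
  let ?u = "gwp \<delta> \<theta> q p x"
  have "(\<Sum>b\<in>Basis. complex_of_real 0 * dq_gwp \<delta> \<theta> q p b x + complex_of_real (A \<bullet> b) * dp_gwp \<delta> \<theta> q p b x)
     = (\<Sum>b\<in>Basis. (\<i> * (complex_of_real (A \<bullet> b) * complex_of_real ((x - \<delta> *\<^sub>R q) \<bullet> b)) * complex_of_real (1/\<delta>)) * ?u)"
    using assms by (intro sum.cong refl) (simp add: dp_gwp_eq field_simps inner_commute)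
  also have "\<dots> = (\<i> * complex_of_real (A \<bullet> (x - \<delta> *\<^sub>R q)) * complex_of_real (1/\<delta>)) * ?u"
    by (simp only: sum_distrib_right[symmetric] sum_distrib_left[symmetric] sum_basis_cmult)
  finally have 1: "(\<Sum>b\<in>Basis. complex_of_real 0 * dq_gwp \<delta> \<theta> q p b x + complex_of_real (A \<bullet> b) * dp_gwp \<delta> \<theta> q p b x)
     = (\<i> * complex_of_real (A \<bullet> (x - \<delta> *\<^sub>R q)) * complex_of_real (1/\<delta>)) * ?u" .
  have 2: "(x - (2*\<delta>) *\<^sub>R q) \<bullet> A = A \<bullet> (x - \<delta> *\<^sub>R q) - \<delta> * (A \<bullet> q)"
    by (simp add: inner_commute[of "x - (2*\<delta>) *\<^sub>R q"] inner_diff_right)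
  show "\<i> * (complex_of_real (((x - (2*\<delta>) *\<^sub>R q) \<bullet> A) / \<delta>) * ?u) =
    complex_of_real (- (A \<bullet> q)) * dtheta_gwp \<delta> \<theta> q p x +
    (\<Sum>b\<in>Basis. complex_of_real 0 * dq_gwp \<delta> \<theta> q p b x + complex_of_real (A \<bullet> b) * dp_gwp \<delta> \<theta> q p b x)"
    unfolding 1 2 dtheta_gwp_eq by (rule aux2[OF assms])
qed

lemma pbd_power[intro]: "pbd a f \<Longrightarrow> pbd a (\<lambda>x. (f x) ^ n)"
  by (induction n) (auto intro!: pbd_mult)

lemma pbd_norm[intro]: "pbd a f \<Longrightarrow> pbd a (\<lambda>x. norm (f x))"
  unfolding pbd_def by simp

lemma pbd_inner2[intro]:
  fixes a c v :: "'a::euclidean_space"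
  shows "pbd a (\<lambda>x. v \<bullet> (x - c))"
  using pbd_inner[of a c v] by (simp add: inner_commute)

lemma pbd_real_integrable:
  fixes h :: "'a::euclidean_space \<Rightarrow> real"
  assumes "pbd a h" "continuous_on UNIV h" "\<sigma> > 0"
  shows "integrable lborel (\<lambda>x. h x * exp (- (norm (x - a))\<^sup>2 / \<sigma>))"
proof -
  have "h \<in> borel_measurable lborel"
    using borel_measurable_continuous_onI[OF assms(2)] by simp
  from pbd_gauss_integrable[OF assms(1) this assms(3)] show ?thesis by (simp add: mult.commute)
qed

lemma pbd_cplx_integrable:
  fixes h :: "'a::euclidean_space \<Rightarrow> complex"
  assumes "pbd a h" "continuous_on UNIV h" "\<sigma> > 0"
  shows "integrable lborel (\<lambda>x. complex_of_real (exp (- (norm (x - a))\<^sup>2 / \<sigma>)) * h x)"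
proof -
  have "h \<in> borel_measurable lborel"
    using borel_measurable_continuous_onI[OF assms(2)] by simp
  from pbd_gauss_integrable[OF assms(1) this assms(3)] show ?thesis by (simp add: scaleR_conv_of_real)
qed

lemma int_hV:
  fixes h V :: "'a::euclidean_space \<Rightarrow> real"
  assumes V2: "integrable lborel (\<lambda>x. (V x)\<^sup>2 * exp (- (norm (x - a))\<^sup>2 / \<sigma>))"
    and Vc: "continuous_on UNIV V" and h: "pbd a h" "continuous_on UNIV h" and s: "\<sigma> > 0"
  shows "integrable lborel (\<lambda>x. h x * V x * exp (- (norm (x - a))\<^sup>2 / \<sigma>))"
proof (rule Bochner_Integration.integrable_bound)
  let ?e = "\<lambda>x. exp (- (norm (x - a))\<^sup>2 / \<sigma>)"
  have "integrable lborel (\<lambda>x. ((h x)\<^sup>2) * ?e x)"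
    by (rule pbd_real_integrable) (use h s in \<open>auto intro!: continuous_intros\<close>)
  then show "integrable lborel (\<lambda>x. ((h x)\<^sup>2) * ?e x + (V x)\<^sup>2 * ?e x)"
    using V2 by auto
  show "(\<lambda>x. h x * V x * ?e x) \<in> borel_measurable lborel"
    using borel_measurable_continuous_onI[OF h(2)] borel_measurable_continuous_onI[OF Vc] by measurable
  show "AE x in lborel. norm (h x * V x * ?e x) \<le> norm ((h x)\<^sup>2 * ?e x + (V x)\<^sup>2 * ?e x)"
  proof (intro AE_I2)
    fix x
    have "\<bar>h x * V x\<bar> \<le> (h x)\<^sup>2 + (V x)\<^sup>2"
    proof -
      have "0 \<le> (\<bar>h x\<bar> - \<bar>V x\<bar>)\<^sup>2" by simp
      then have "2 * (\<bar>h x\<bar> * \<bar>V x\<bar>) \<le> (h x)\<^sup>2 + (V x)\<^sup>2"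
        by (simp add: power2_eq_square algebra_simps)
      moreover have "0 \<le> \<bar>h x\<bar> * \<bar>V x\<bar>" by simp
      ultimately have "\<bar>h x\<bar> * \<bar>V x\<bar> \<le> (h x)\<^sup>2 + (V x)\<^sup>2" by linarith
      then show ?thesis by (simp add: abs_mult)
    qed
    then have "\<bar>h x * V x\<bar> * ?e x \<le> ((h x)\<^sup>2 + (V x)\<^sup>2) * ?e x"
      by (rule mult_right_mono) simp
    then show "norm (h x * V x * ?e x) \<le> norm ((h x)\<^sup>2 * ?e x + (V x)\<^sup>2 * ?e x)"
      by (simp add: abs_mult distrib_right)
  qed
qed

lemma rho_alt: "rho \<delta> q x = ((2 * pi * \<delta>\<^sup>2) powr (- real DIM('a) / 4))\<^sup>2 * exp (- (norm (x - (2*\<delta>) *\<^sub>R q))\<^sup>2 / (2*\<delta>\<^sup>2))"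
  for q x :: "'a::euclidean_space"
  by (simp add: rho_def)

lemma rho_integrable: "\<delta> \<noteq> 0 \<Longrightarrow> integrable lborel (rho \<delta> q)"
  unfolding rho_def by (intro integrable_mult_right gauss_integrable) simp

lemma rho_integral:
  fixes q :: "'a::euclidean_space"
  assumes "\<delta> \<noteq> 0"
  shows "integral\<^sup>L lborel (rho \<delta> q) = 1"
proof -
  define y where "y = 2 * pi * \<delta>\<^sup>2"
  have y: "y > 0" using assms by (simp add: y_def)
  have "integral\<^sup>L lborel (rho \<delta> q) = (y powr (- real DIM('a) / 4))\<^sup>2 * integral\<^sup>L lborel (\<lambda>x. exp (- (norm (x - (2*\<delta>) *\<^sub>R q))\<^sup>2 / (2*\<delta>\<^sup>2)))"
    unfolding rho_def y_def by (rule integral_mult_right_zero)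
  also have "integral\<^sup>L lborel (\<lambda>x. exp (- (norm (x - (2*\<delta>) *\<^sub>R q))\<^sup>2 / (2*\<delta>\<^sup>2))) = sqrt (pi * (2*\<delta>\<^sup>2)) ^ DIM('a)"
    by (rule gauss_integral) (use assms in simp)
  also have "sqrt (pi * (2*\<delta>\<^sup>2)) = y powr (1/2)"
    using y by (simp add: y_def powr_half_sqrt mult_ac)
  also have "(y powr (- real DIM('a) / 4))\<^sup>2 * (y powr (1/2)) ^ DIM('a) = 1"
    using y by (simp add: powr_power powr_add[symmetric])
  finally show ?thesis .
qed

lemma sq_bound: "0 \<le> (X::real) \<Longrightarrow> X \<le> Y + Z \<Longrightarrow> X\<^sup>2 \<le> 2 * Y\<^sup>2 + 2 * Z\<^sup>2"
proof -
  assume "0 \<le> X" "X \<le> Y + Z"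
  then have "X\<^sup>2 \<le> (Y + Z)\<^sup>2" by (intro power_mono) auto
  also have "\<dots> \<le> 2 * Y\<^sup>2 + 2 * Z\<^sup>2"
  proof -
    have "0 \<le> (Y - Z)\<^sup>2" by simp
    then show ?thesis by (simp add: power2_eq_square algebra_simps)
  qed
  finally show ?thesis .
qed

lemma nsq_expand:
  fixes x b a :: "'a::euclidean_space"
  shows "(norm (x + r *\<^sub>R b - a))\<^sup>2 = (norm (x - a))\<^sup>2 + 2 * r * ((x - a) \<bullet> b) + r\<^sup>2 * (b \<bullet> b)"
proof -
  have "x + r *\<^sub>R b - a = (x - a) + r *\<^sub>R b" by simp
  then show ?thesis unfolding power2_norm_eq_inner
    by (simp add: inner_add_left inner_add_right inner_commute power2_eq_square algebra_simps)
qed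

lemma helper1: "(P::real) * E + Gx * (- (K / d) * E) = P * E + (- 1 / d) * (K * Gx * E)"
  by (simp add: algebra_simps divide_inverse)

lemma helper2: "- (K / d) * (E::real) = (- 1 / d) * (K * E)"
  by simp

lemma pbd_nsq: "pbd a (\<lambda>x. (norm (x - a))\<^sup>2)"
  unfolding pbd_def by (rule exI[of _ 1], rule exI[of _ 1]) simp

lemma pbd_divide[intro]:
  fixes f :: "'a::euclidean_space \<Rightarrow> 'b::{real_normed_field}"
  shows "pbd a f \<Longrightarrow> pbd a (\<lambda>x. f x / k)"
  using pbd_mult[of a f "\<lambda>_. 1/k"] by (simp add: pbd_const)

theorem corollary7p7:
  fixes \<delta> hb :: real and V :: "'a::euclidean_space \<Rightarrow> real" and I :: "real set"
    and \<theta> :: "real \<Rightarrow> real" and q p :: "real \<Rightarrow> 'a"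
  assumes "\<delta> > 0" and "hb > 0"
    and "smooth_fun V"
    and "open I"
    and "\<theta> C1_differentiable_on I" and "q C1_differentiable_on I" and "p C1_differentiable_on I"
    and "\<And>t b. t \<in> I \<Longrightarrow> b \<in> Basis \<Longrightarrow>
           integrable lborel (\<lambda>x. cnj (gwp_curve \<delta> \<theta> q p t x)
              * (complex_of_real (dirderiv b V x) * gwp_curve \<delta> \<theta> q p t x))"
    and "McLachlan_sol \<delta> hb V I \<theta> q p \<or> KS_sol \<delta> hb V I \<theta> q p"
    and "t \<in> I"
  shows "vector_derivative q (at t) = (hb / (2 * \<delta>\<^sup>2)) *\<^sub>R p t
         \<and> (\<forall>b\<in>Basis.
           complex_of_real (vector_derivative p (at t) \<bullet> b)
           = - complex_of_real (\<delta> / hb) *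
               l2_inner (gwp_curve \<delta> \<theta> q p t)
                        (\<lambda>x. complex_of_real (dirderiv b V x) * gwp_curve \<delta> \<theta> q p t x))"
proof -
  have dne: "\<delta> \<noteq> 0" using assms(1) by simp
  have hbne: "hb \<noteq> 0" using assms(2) by simp
  have tI: "t \<in> I" by fact
  obtain D\<theta> where D\<theta>: "\<forall>x\<in>I. (\<theta> has_vector_derivative D\<theta> x) (at x)"
    using assms(5) unfolding C1_differentiable_on_def by blast
  obtain Dq where Dq: "\<forall>x\<in>I. (q has_vector_derivative Dq x) (at x)"
    using assms(6) unfolding C1_differentiable_on_def by blast
  obtain Dp where Dp: "\<forall>x\<in>I. (p has_vector_derivative Dp x) (at x)"
    using assms(7) unfolding C1_differentiable_on_def by blast
  define \<theta>d where "\<theta>d = D\<theta> t"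
  define qd where "qd = Dq t"
  define pd where "pd = Dp t"
  have h\<theta>: "(\<theta> has_real_derivative \<theta>d) (at t)"
    using D\<theta> tI by (simp add: has_real_derivative_iff_has_vector_derivative \<theta>d_def)
  have hq: "(q has_vector_derivative qd) (at t)" using Dq tI by (simp add: qd_def)
  have hp: "(p has_vector_derivative pd) (at t)" using Dp tI by (simp add: pd_def)
  have vq: "vector_derivative q (at t) = qd" by (rule vector_derivative_at[OF hq])
  have vp: "vector_derivative p (at t) = pd" by (rule vector_derivative_at[OF hp])
  define \<theta>0 where "\<theta>0 = \<theta> t"
  define q0 where "q0 = q t"
  define p0 where "p0 = p t"
  define u where "u = gwp \<delta> \<theta>0 q0 p0"
  have gc: "gwp_curve \<delta> \<theta> q p t = u" unfolding gwp_curve_def u_def \<theta>0_def q0_def p0_def ..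
  define a where "a = (2*\<delta>) *\<^sub>R q0"
  define Lap where "Lap x = (\<Sum>b\<in>Basis. (hfac \<delta> q0 p0 b x)\<^sup>2 - complex_of_real (1 / (2*\<delta>\<^sup>2)))" for x
  define T where "T x = \<i> * complex_of_real \<theta>d
       - complex_of_real (((x - a) \<bullet> (0 - (2*\<delta>) *\<^sub>R qd)) / (2*\<delta>\<^sup>2))
       + \<i> * complex_of_real ((pd \<bullet> (x - \<delta> *\<^sub>R q0) + p0 \<bullet> (0 - \<delta> *\<^sub>R qd)) / \<delta>)" for x
  have td: "time_deriv (gwp_curve \<delta> \<theta> q p) t x = T x * u x" for x
  proof -
    have "((\<lambda>s. gwp \<delta> (\<theta> s) (q s) (p s) x) has_vector_derivative
     ((\<i> * complex_of_real \<theta>d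
       - complex_of_real (((x - (2*\<delta>) *\<^sub>R q t) \<bullet> (0 - (2*\<delta>) *\<^sub>R qd)) / (2*\<delta>\<^sup>2))
       + \<i> * complex_of_real ((pd \<bullet> (x - \<delta> *\<^sub>R q t) + p t \<bullet> (0 - \<delta> *\<^sub>R qd)) / \<delta>))
      * gwp \<delta> (\<theta> t) (q t) (p t) x)) (at t)"
      by (rule gwp_path_deriv[OF h\<theta> hq hp]) simp
    then show ?thesis
      unfolding time_deriv_def gwp_curve_def T_def a_def u_def \<theta>0_def q0_def p0_def
      by (rule vector_derivative_at)
  qed
  have ham: "hamiltonian hb V u x = (- complex_of_real (hb\<^sup>2/2) * Lap x + complex_of_real (V x)) * u x" for x
    unfolding hamiltonian_def u_def Lap_def laplacian_gwp_eq[OF dne] by (simp add: algebra_simps)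
  define W where "W x = T x - \<i> * complex_of_real (hb/2) * Lap x + \<i> * complex_of_real (V x / hb)" for x
  define wf where "wf = (\<lambda>x. time_deriv (gwp_curve \<delta> \<theta> q p) t x - hamiltonian hb V (gwp_curve \<delta> \<theta> q p t) x / (\<i> * complex_of_real hb))"
  have wf: "wf x = W x * u x" for x
    unfolding wf_def gc td ham W_def using hbne
    by (simp add: field_simps power2_eq_square)
  define g where "g A x = ((x - a) \<bullet> A) / \<delta>" for A x
  define vA where "vA A = (\<lambda>x. complex_of_real (g A x) * u x)" for A
  have tanR: "vA A \<in> tangent_space \<delta> (\<theta> t) (q t) (p t)" for A
    unfolding vA_def g_def a_def u_def \<theta>0_def q0_def p0_def by (rule tan_R[OF dne])
  have tanI: "(\<lambda>x. \<i> * vA A x) \<in> tangent_space \<delta> (\<theta> t) (q t) (p t)" for A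
    unfolding vA_def g_def a_def u_def \<theta>0_def q0_def p0_def by (rule tan_I[OF dne])
  have l2I: "l2_inner (\<lambda>x. \<i> * f x) h = - \<i> * l2_inner f h" for f h :: "'a \<Rightarrow> complex"
  proof -
    have "l2_inner (\<lambda>x. \<i> * f x) h = integral\<^sup>L lborel (\<lambda>x. (- \<i>) * (cnj (f x) * h x))"
      unfolding l2_inner_def by (simp add: mult.assoc)
    also have "\<dots> = - \<i> * l2_inner f h" unfolding l2_inner_def by (rule integral_mult_right_zero)
    finally show ?thesis .
  qed
  have L0: "l2_inner (vA A) wf = 0" for A
  proof -
    from assms(9) have "Re (l2_inner (vA A) wf) = 0 \<and> Re (l2_inner (\<lambda>x. \<i> * vA A x) wf) = 0"
    proof
      assume "McLachlan_sol \<delta> hb V I \<theta> q p"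
      then show ?thesis using tI tanR[of A] tanI[of A] unfolding McLachlan_sol_def wf_def by blast
    next
      assume "KS_sol \<delta> hb V I \<theta> q p"
      then have "Im (l2_inner (vA A) wf) = 0 \<and> Im (l2_inner (\<lambda>x. \<i> * vA A x) wf) = 0"
        using tI tanR[of A] tanI[of A] unfolding KS_sol_def wf_def by blast
      then show ?thesis unfolding l2I by simp
    qed
    then show ?thesis unfolding l2I by (simp add: complex_eq_iff)
  qed
  have Fdef: "cnj (vA A x) * wf x = complex_of_real (g A x * rho \<delta> q0 x) * W x" for A x
  proof -
    have "cnj (vA A x) * wf x = complex_of_real (g A x) * (cnj (u x) * u x) * W x"
      unfolding vA_def wf by simp
    then show ?thesis unfolding u_def gwp_sq by simp
  qed
  have sm: "\<And>bs. set bs \<subseteq> Basis \<Longrightarrow> continuous_on UNIV (dirderivs bs V) \<and>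
        (\<forall>b\<in>Basis. \<forall>x. (\<lambda>r. dirderivs bs V (x + r *\<^sub>R b)) differentiable (at 0))"
    using assms(3) unfolding smooth_fun_def by blast
  have Vc: "continuous_on UNIV V" using sm[of "[]"] by simp
  have V'c: "continuous_on UNIV (dirderiv b V)" if "b \<in> Basis" for b
    using sm[of "[b]"] that by simp
  have Vd: "((\<lambda>r. V (x + r *\<^sub>R b)) has_real_derivative dirderiv b V x) (at 0)" if "b \<in> Basis" for b x
  proof -
    have "(\<lambda>r. V (x + r *\<^sub>R b)) differentiable (at 0)" using sm[of "[]"] that by simp
    then show ?thesis unfolding dirderiv_def has_real_derivative_iff_has_vector_derivative
      by (simp add: vector_derivative_works)
  qed
  define e where "e x = exp (- (norm (x - a))\<^sup>2 / (2*\<delta>\<^sup>2))" for x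
  define N2 where "N2 = ((2 * pi * \<delta>\<^sup>2) powr (- real DIM('a) / 4))\<^sup>2"
  have rho_e: "rho \<delta> q0 x = N2 * e x" for x unfolding rho_def N2_def e_def a_def ..
  have N2pos: "N2 > 0" unfolding N2_def using dne by simp
  have epos: "e x > 0" for x unfolding e_def by simp
  have ec: "continuous_on UNIV e" unfolding e_def using dne by (intro continuous_intros) auto
  have sig: "2*\<delta>\<^sup>2 > 0" using dne by simp
  have IP: "integrable lborel (\<lambda>x. h x * e x)" if "pbd a h" "continuous_on UNIV h" for h
    unfolding e_def by (rule pbd_real_integrable[OF that sig])
  have IC: "integrable lborel (\<lambda>x. complex_of_real (e x) * h x)" if "pbd a h" "continuous_on UNIV h" for h
    unfolding e_def by (rule pbd_cplx_integrable[OF that sig])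
  have pbd_hfac: "pbd a (hfac \<delta> q0 p0 b)" for b
    unfolding hfac_def[abs_def] a_def[symmetric] by (intro pbd_add pbd_mult pbd_of_real pbd_minus pbd_inner' pbd_const)
  have pbd_Lap: "pbd a Lap"
    unfolding Lap_def[abs_def] by (intro pbd_sum pbd_diff pbd_power pbd_hfac pbd_const)
  have cont_hfac: "continuous_on UNIV (hfac \<delta> q0 p0 b)" for b
    unfolding hfac_def[abs_def] using dne by (intro continuous_intros) auto
  have cont_Lap: "continuous_on UNIV Lap"
    unfolding Lap_def[abs_def] by (intro continuous_intros cont_hfac)
  have pbd_T: "pbd a T"
    unfolding T_def[abs_def] by (intro pbd_add pbd_diff pbd_mult pbd_of_real pbd_divide pbd_inner pbd_inner2 pbd_const)
  have cont_T: "continuous_on UNIV T"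
    unfolding T_def[abs_def] using dne by (intro continuous_intros) auto
  have "in_dom_H hb V (gwp_curve \<delta> \<theta> q p t)"
    using assms(9) tI unfolding McLachlan_sol_def KS_sol_def by blast
  then have inH: "in_dom_H hb V u" unfolding gc .
  have Hint: "integrable lborel (\<lambda>x. (cmod (hamiltonian hb V u x))\<^sup>2)"
    using inH unfolding in_dom_H_def .
  have uu: "cnj (u x) * u x = complex_of_real (N2 * e x)" for x unfolding u_def gwp_sq rho_e ..
  have normu: "(cmod (u x))\<^sup>2 = N2 * e x" for x
    unfolding u_def norm_gwp_sq rho_e ..
  have V2: "integrable lborel (\<lambda>x. (V x)\<^sup>2 * e x)"
  proof (rule Bochner_Integration.integrable_bound)
    show "integrable lborel (\<lambda>x. (2 / N2) * (cmod (hamiltonian hb V u x))\<^sup>2 + (2 * (hb\<^sup>2/2)\<^sup>2) * ((cmod (Lap x))\<^sup>2 * e x))"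
    proof -
      have "integrable lborel (\<lambda>x. (cmod (Lap x))\<^sup>2 * e x)"
        by (rule IP) (use pbd_Lap cont_Lap in \<open>auto intro!: continuous_intros pbd_power pbd_norm\<close>)
      then show ?thesis using Hint by (intro Bochner_Integration.integrable_add integrable_mult_right)
    qed
    show "(\<lambda>x. (V x)\<^sup>2 * e x) \<in> borel_measurable lborel"
      using borel_measurable_continuous_onI[OF Vc] borel_measurable_continuous_onI[OF ec] by measurable
    show "AE x in lborel. norm ((V x)\<^sup>2 * e x) \<le> norm ((2 / N2) * (cmod (hamiltonian hb V u x))\<^sup>2 + (2 * (hb\<^sup>2/2)\<^sup>2) * ((cmod (Lap x))\<^sup>2 * e x))"
    proof (intro AE_I2)
      fix x
      let ?H = "hamiltonian hb V u x"
      have eq: "complex_of_real (V x) * u x = ?H + complex_of_real (hb\<^sup>2/2) * Lap x * u x"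
        unfolding ham by (simp add: algebra_simps)
      have "\<bar>V x\<bar> * cmod (u x) \<le> cmod ?H + (hb\<^sup>2/2) * cmod (Lap x) * cmod (u x)"
      proof -
        have "\<bar>V x\<bar> * cmod (u x) = cmod (complex_of_real (V x) * u x)" by (simp add: norm_mult)
        also have "\<dots> \<le> cmod ?H + cmod (complex_of_real (hb\<^sup>2/2) * Lap x * u x)"
          unfolding eq by (rule norm_triangle_ineq)
        also have "cmod (complex_of_real (hb\<^sup>2/2) * Lap x * u x) = (hb\<^sup>2/2) * cmod (Lap x) * cmod (u x)"
          unfolding norm_mult norm_of_real by simp
        finally show ?thesis .
      qed
      then have "(\<bar>V x\<bar> * cmod (u x))\<^sup>2 \<le> 2 * (cmod ?H)\<^sup>2 + 2 * ((hb\<^sup>2/2) * cmod (Lap x) * cmod (u x))\<^sup>2"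
        by (intro sq_bound) auto
      moreover have "(\<bar>V x\<bar> * cmod (u x))\<^sup>2 = (V x)\<^sup>2 * (N2 * e x)"
        by (simp add: power_mult_distrib normu[symmetric])
      moreover have "((hb\<^sup>2/2) * cmod (Lap x) * cmod (u x))\<^sup>2 = (hb\<^sup>2/2)\<^sup>2 * (cmod (Lap x))\<^sup>2 * (N2 * e x)"
        by (simp only: power_mult_distrib normu)
      ultimately have "(V x)\<^sup>2 * (N2 * e x) \<le> 2 * (cmod ?H)\<^sup>2 + 2 * ((hb\<^sup>2/2)\<^sup>2 * (cmod (Lap x))\<^sup>2 * (N2 * e x))"
        by simp
      then have "N2 * ((V x)\<^sup>2 * e x) \<le> N2 * ((2 / N2) * (cmod ?H)\<^sup>2 + (2 * (hb\<^sup>2/2)\<^sup>2) * ((cmod (Lap x))\<^sup>2 * e x))"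
        using N2pos by (simp add: algebra_simps)
      then have "(V x)\<^sup>2 * e x \<le> (2 / N2) * (cmod ?H)\<^sup>2 + (2 * (hb\<^sup>2/2)\<^sup>2) * ((cmod (Lap x))\<^sup>2 * e x)"
        using N2pos by simp
      moreover have "0 \<le> (V x)\<^sup>2 * e x" using epos[of x] by simp
      ultimately show "norm ((V x)\<^sup>2 * e x) \<le> norm ((2 / N2) * (cmod ?H)\<^sup>2 + (2 * (hb\<^sup>2/2)\<^sup>2) * ((cmod (Lap x))\<^sup>2 * e x))"
        by simp
    qed
  qed
  have IV: "integrable lborel (\<lambda>x. h x * V x * e x)" if "pbd a h" "continuous_on UNIV h" for h
    using int_hV[of V a "2*\<delta>\<^sup>2" h] V2 Vc that sig unfolding e_def by blast
  have IV': "integrable lborel (\<lambda>x. dirderiv b V x * e x)" if b: "b \<in> Basis" for b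
  proof -
    have "integrable lborel (\<lambda>x. cnj (u x) * (complex_of_real (dirderiv b V x) * u x))"
      using assms(8)[OF tI b] unfolding gc .
    then have "integrable lborel (\<lambda>x. Re (cnj (u x) * (complex_of_real (dirderiv b V x) * u x)))"
      by (rule integrable_Re)
    moreover have "Re (cnj (u x) * (complex_of_real (dirderiv b V x) * u x)) = N2 * (dirderiv b V x * e x)" for x
    proof -
      have "cnj (u x) * (complex_of_real (dirderiv b V x) * u x) = complex_of_real (dirderiv b V x) * (cnj (u x) * u x)"
        by (simp add: mult_ac)
      also have "\<dots> = complex_of_real (N2 * (dirderiv b V x * e x))" unfolding uu by simp
      finally have X: "cnj (u x) * (complex_of_real (dirderiv b V x) * u x) = complex_of_real (N2 * (dirderiv b V x * e x))" .
      show ?thesis unfolding X by (rule Re_complex_of_real)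
    qed
    ultimately have "integrable lborel (\<lambda>x. N2 * (dirderiv b V x * e x))" by simp
    then have "integrable lborel (\<lambda>x. (1/N2) * (N2 * (dirderiv b V x * e x)))" by (rule integrable_mult_right)
    then show ?thesis using N2pos by simp
  qed
  have pbd_g: "pbd a (g A)" for A unfolding g_def[abs_def] by (intro pbd_divide pbd_inner)
  have cont_g: "continuous_on UNIV (g A)" for A unfolding g_def[abs_def] using dne by (intro continuous_intros) auto
  have L_int: "l2_inner (vA A) wf = integral\<^sup>L lborel (\<lambda>x. complex_of_real (g A x * rho \<delta> q0 x) * W x)" for A
    unfolding l2_inner_def Fdef ..
  have Feq: "complex_of_real (g A x * rho \<delta> q0 x) * W x
     = complex_of_real (e x) * (complex_of_real N2 * complex_of_real (g A x) * (T x - \<i> * complex_of_real (hb/2) * Lap x))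
       + (\<i> * complex_of_real (N2/hb)) * complex_of_real (g A x * V x * e x)" for A x
    unfolding W_def rho_e using hbne by (simp add: field_simps)
  have Fint: "integrable lborel (\<lambda>x. complex_of_real (g A x * rho \<delta> q0 x) * W x)" for A
  proof -
    have 1: "integrable lborel (\<lambda>x. complex_of_real (e x) * (complex_of_real N2 * complex_of_real (g A x) * (T x - \<i> * complex_of_real (hb/2) * Lap x)))"
      by (rule IC) (use pbd_g pbd_T pbd_Lap cont_g cont_T cont_Lap in \<open>auto intro!: pbd_mult pbd_diff pbd_of_real pbd_const continuous_intros\<close>)
    have 2: "integrable lborel (\<lambda>x. (\<i> * complex_of_real (N2/hb)) * complex_of_real (g A x * V x * e x))"
      using IV[OF pbd_g cont_g, of A] by (intro integrable_mult_right integrable_of_real)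
    show ?thesis unfolding Feq using 1 2 by (rule Bochner_Integration.integrable_add)
  qed
  define A0 where "A0 = qd - (hb / (2 * \<delta>\<^sup>2)) *\<^sub>R p0"
  have ReW: "Re (W x) = g A0 x" for x
  proof -
    have "Re (W x) = Re (T x) + (hb/2) * Im (Lap x)" unfolding W_def by simp
    also have "Im (Lap x) = - (((x - a) \<bullet> p0) / \<delta>^3)" unfolding Lap_def a_def by (rule Im_lap[OF dne])
    also have "Re (T x) = ((x - a) \<bullet> qd) / \<delta>" unfolding T_def using dne by (simp add: power2_eq_square field_simps)
    finally show ?thesis unfolding g_def A0_def using dne
      by (simp add: inner_diff_right power2_eq_square power3_eq_cube field_simps)
  qed
  have Re0: "integral\<^sup>L lborel (\<lambda>x. (g A0 x)\<^sup>2 * rho \<delta> q0 x) = 0"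
  proof -
    have "integral\<^sup>L lborel (\<lambda>x. Re (complex_of_real (g A0 x * rho \<delta> q0 x) * W x))
        = Re (integral\<^sup>L lborel (\<lambda>x. complex_of_real (g A0 x * rho \<delta> q0 x) * W x))"
      by (rule integral_bounded_linear[OF bounded_linear_Re Fint])
    also have "\<dots> = 0" using L0[of A0] unfolding L_int by simp
    finally show ?thesis by (simp add: ReW power2_eq_square mult_ac)
  qed
  have A0z: "A0 = 0"
  proof -
    have int: "integrable lborel (\<lambda>x. (g A0 x)\<^sup>2 * rho \<delta> q0 x)"
    proof -
      have "integrable lborel (\<lambda>x. N2 * ((g A0 x)\<^sup>2 * e x))"
        by (intro integrable_mult_right IP) (use pbd_g cont_g in \<open>auto intro!: pbd_power continuous_intros\<close>)
      then show ?thesis by (simp add: rho_e mult_ac)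
    qed
    have nn: "AE x in lborel. 0 \<le> (g A0 x)\<^sup>2 * rho \<delta> q0 x"
      by (intro AE_I2) (simp add: rho_nonneg)
    have "AE x in lborel. (g A0 x)\<^sup>2 * rho \<delta> q0 x = 0"
      using Re0 integral_nonneg_eq_0_iff_AE[OF int nn] by simp
    then have "AE x in lebesgue. x \<in> {x. (g A0 x)\<^sup>2 * rho \<delta> q0 x = 0}" by (auto intro: AE_completion)
    moreover have "closed {x. (g A0 x)\<^sup>2 * rho \<delta> q0 x = 0}"
    proof -
      have "continuous_on UNIV (\<lambda>x. (g A0 x)\<^sup>2 * rho \<delta> q0 x)"
        using cont_g[of A0] ec unfolding rho_e by (intro continuous_intros) auto
      then show ?thesis by (intro closed_Collect_eq) auto
    qed
    ultimately have "(g A0 (a + \<delta> *\<^sub>R A0))\<^sup>2 * rho \<delta> q0 (a + \<delta> *\<^sub>R A0) = 0"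
      using mem_closed_if_AE_lebesgue by blast
    then have "g A0 (a + \<delta> *\<^sub>R A0) = 0" using rho_pos[OF dne, of q0 "a + \<delta> *\<^sub>R A0"] by auto
    then have "A0 \<bullet> A0 = 0" unfolding g_def using dne by simp
    then show ?thesis by simp
  qed
  have part1: "vector_derivative q (at t) = (hb / (2 * \<delta>\<^sup>2)) *\<^sub>R p t"
    using A0z unfolding vq A0_def p0_def by simp
  define P1 where "P1 x = \<theta>d + (pd \<bullet> (x - \<delta> *\<^sub>R q0) + p0 \<bullet> (0 - \<delta> *\<^sub>R qd)) / \<delta>
      - (hb/2) * ((norm (x - a))\<^sup>2 / (4*\<delta>^4) - (norm p0)\<^sup>2 / \<delta>\<^sup>2 - real DIM('a) / (2*\<delta>\<^sup>2))" for x
  define G where "G x = P1 x + V x / hb" for x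
  have ImW: "Im (W x) = G x" for x
  proof -
    have "Im (W x) = Im (T x) - (hb/2) * Re (Lap x) + V x / hb" unfolding W_def by simp
    also have "Re (Lap x) = (norm (x - a))\<^sup>2 / (4*\<delta>^4) - (norm p0)\<^sup>2 / \<delta>\<^sup>2 - real DIM('a) / (2*\<delta>\<^sup>2)"
      unfolding Lap_def a_def by (rule Re_lap[OF dne])
    finally show ?thesis unfolding G_def P1_def T_def by simp
  qed
  have pbd_P1: "pbd a P1"
    unfolding P1_def[abs_def]
    by (intro pbd_nsq pbd_add pbd_diff pbd_mult pbd_divide pbd_inner pbd_inner2 pbd_const)
  have cont_P1: "continuous_on UNIV P1" unfolding P1_def[abs_def] using dne by (intro continuous_intros) auto
  have he: "((\<lambda>r. e (x + r *\<^sub>R c)) has_real_derivative (- (((x - a) \<bullet> c) / \<delta>\<^sup>2) * e x)) (at 0)" for x c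
  proof -
    have eq: "(\<lambda>r. e (x + r *\<^sub>R c)) = (\<lambda>r. exp (- ((norm (x - a))\<^sup>2 + 2 * r * ((x - a) \<bullet> c) + r\<^sup>2 * (c \<bullet> c)) / (2*\<delta>\<^sup>2)))"
      unfolding e_def nsq_expand ..
    show ?thesis unfolding eq using dne
      by (auto intro!: derivative_eq_intros simp: e_def field_simps power2_eq_square)
  qed
  have part2: "complex_of_real (vector_derivative p (at t) \<bullet> c)
           = - complex_of_real (\<delta> / hb) *
               l2_inner (gwp_curve \<delta> \<theta> q p t)
                        (\<lambda>x. complex_of_real (dirderiv c V x) * gwp_curve \<delta> \<theta> q p t x)" if c: "c \<in> Basis" for c
  proof -
    define P2 where "P2 x = (pd \<bullet> c) / \<delta> - (hb / (4*\<delta>^4)) * ((x - a) \<bullet> c)" for x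
    define V' where "V' = dirderiv c V"
    have hP1: "((\<lambda>r. P1 (x + r *\<^sub>R c)) has_real_derivative P2 x) (at 0)" for x
    proof -
      have eq: "(\<lambda>r. P1 (x + r *\<^sub>R c)) = (\<lambda>r. \<theta>d + (pd \<bullet> (x - \<delta> *\<^sub>R q0) + r * (pd \<bullet> c) + p0 \<bullet> (0 - \<delta> *\<^sub>R qd)) / \<delta>
      - (hb/2) * (((norm (x - a))\<^sup>2 + 2 * r * ((x - a) \<bullet> c) + r\<^sup>2 * (c \<bullet> c)) / (4*\<delta>^4) - (norm p0)\<^sup>2 / \<delta>\<^sup>2 - real DIM('a) / (2*\<delta>\<^sup>2)))"
        unfolding P1_def nsq_expand[symmetric] by (simp add: inner_simps algebra_simps)
      show ?thesis unfolding eq using dne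
        by (auto intro!: derivative_eq_intros simp: P2_def field_simps power2_eq_square)
    qed
    have hG: "((\<lambda>r. G (x + r *\<^sub>R c)) has_real_derivative (P2 x + V' x / hb)) (at 0)" for x
      unfolding G_def V'_def by (intro DERIV_add DERIV_cdivide hP1 Vd[OF c])
    have h\<phi>: "((\<lambda>r. G (x + r *\<^sub>R c) * e (x + r *\<^sub>R c)) has_real_derivative
        ((P2 x + V' x / hb) * e x + G x * (- (((x - a) \<bullet> c) / \<delta>\<^sup>2) * e x))) (at 0)" for x
      using DERIV_mult[OF hG[of x] he[of x c]] by (simp add: algebra_simps)
    have cont_P2: "continuous_on UNIV P2" unfolding P2_def[abs_def] by (intro continuous_intros)
    have pbd_P2: "pbd a P2" unfolding P2_def[abs_def] by (intro pbd_diff pbd_mult pbd_inner pbd_const)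
    have pbd_c: "pbd a (\<lambda>x. (x - a) \<bullet> c)" by (rule pbd_inner)
    have cont_c: "continuous_on UNIV (\<lambda>x. (x - a) \<bullet> c)" by (intro continuous_intros)
    have V'c': "continuous_on UNIV V'" unfolding V'_def using V'c[OF c] .
    have i1: "integrable lborel (\<lambda>x. P1 x * e x)" by (rule IP[OF pbd_P1 cont_P1])
    have i2: "integrable lborel (\<lambda>x. 1 * V x * e x)" by (rule IV) (auto intro: pbd_const continuous_intros)
    have iG: "integrable lborel (\<lambda>x. G x * e x)"
    proof -
      have "integrable lborel (\<lambda>x. P1 x * e x + (1/hb) * (1 * V x * e x))"
        using i1 i2 by (intro Bochner_Integration.integrable_add integrable_mult_right)
      then show ?thesis unfolding G_def by (simp add: algebra_simps)
    qed
    have i3: "integrable lborel (\<lambda>x. P2 x * e x)" by (rule IP[OF pbd_P2 cont_P2])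
    have i4: "integrable lborel (\<lambda>x. V' x * e x)" unfolding V'_def by (rule IV'[OF c])
    have i5: "integrable lborel (\<lambda>x. ((x - a) \<bullet> c * P1 x) * e x)"
      by (rule IP) (use pbd_c pbd_P1 cont_c cont_P1 in \<open>auto intro: pbd_mult continuous_intros\<close>)
    have i6: "integrable lborel (\<lambda>x. ((x - a) \<bullet> c) * V x * e x)" by (rule IV[OF pbd_c cont_c])
    have iGc: "integrable lborel (\<lambda>x. ((x - a) \<bullet> c) * G x * e x)"
    proof -
      have "integrable lborel (\<lambda>x. ((x - a) \<bullet> c * P1 x) * e x + (1/hb) * (((x - a) \<bullet> c) * V x * e x))"
        using i5 i6 by (intro Bochner_Integration.integrable_add integrable_mult_right)
      then show ?thesis unfolding G_def by (simp add: algebra_simps)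
    qed
    have iG': "integrable lborel (\<lambda>x. (P2 x + V' x / hb) * e x)"
    proof -
      have "integrable lborel (\<lambda>x. P2 x * e x + (1/hb) * (V' x * e x))"
        using i3 i4 by (intro Bochner_Integration.integrable_add integrable_mult_right)
      then show ?thesis by (simp add: algebra_simps)
    qed
    have i\<phi>': "integrable lborel (\<lambda>x. (P2 x + V' x / hb) * e x + G x * (- (((x - a) \<bullet> c) / \<delta>\<^sup>2) * e x))"
    proof -
      have "integrable lborel (\<lambda>x. (P2 x + V' x / hb) * e x + (- 1 / \<delta>\<^sup>2) * (((x - a) \<bullet> c) * G x * e x))"
        using iG' iGc by (intro Bochner_Integration.integrable_add integrable_mult_right)
      then show ?thesis by (simp only: helper1)
    qed
    have cont\<phi>': "continuous_on UNIV (\<lambda>x. (P2 x + V' x / hb) * e x + G x * (- (((x - a) \<bullet> c) / \<delta>\<^sup>2) * e x))"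
      unfolding G_def using cont_P2 V'c' ec cont_P1 Vc hbne dne by (intro continuous_intros) auto
    have ibp1: "integral\<^sup>L lborel (\<lambda>x. (P2 x + V' x / hb) * e x + G x * (- (((x - a) \<bullet> c) / \<delta>\<^sup>2) * e x)) = 0"
      by (rule ibp[OF h\<phi> cont\<phi>' iG i\<phi>'])
    have ImF: "integral\<^sup>L lborel (\<lambda>x. ((x - a) \<bullet> c) * G x * e x) = 0"
    proof -
      have "integral\<^sup>L lborel (\<lambda>x. Im (complex_of_real (g c x * rho \<delta> q0 x) * W x))
          = Im (integral\<^sup>L lborel (\<lambda>x. complex_of_real (g c x * rho \<delta> q0 x) * W x))"
        by (rule integral_bounded_linear[OF bounded_linear_Im Fint])
      also have "\<dots> = 0" using L0[of c] unfolding L_int by simp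
      finally have "integral\<^sup>L lborel (\<lambda>x. (N2 / \<delta>) * (((x - a) \<bullet> c) * G x * e x)) = 0"
        by (simp add: ImW g_def rho_e mult_ac)
      then show ?thesis using N2pos dne by simp
    qed
    have "integral\<^sup>L lborel (\<lambda>x. (P2 x + V' x / hb) * e x + G x * (- (((x - a) \<bullet> c) / \<delta>\<^sup>2) * e x))
        = integral\<^sup>L lborel (\<lambda>x. (P2 x + V' x / hb) * e x + (- 1 / \<delta>\<^sup>2) * (((x - a) \<bullet> c) * G x * e x))"
      by (simp only: helper1)
    also have "\<dots> = integral\<^sup>L lborel (\<lambda>x. (P2 x + V' x / hb) * e x) + (- 1 / \<delta>\<^sup>2) * integral\<^sup>L lborel (\<lambda>x. ((x - a) \<bullet> c) * G x * e x)"
      using iG' iGc by (simp add: Bochner_Integration.integral_add)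
    finally have s1: "integral\<^sup>L lborel (\<lambda>x. (P2 x + V' x / hb) * e x) = 0" using ibp1 ImF by simp
    have ie: "integrable lborel e"
      using IP[of "\<lambda>_. 1"] by (simp add: pbd_const)
    have ibp2: "integral\<^sup>L lborel (\<lambda>x. - (((x - a) \<bullet> c) / \<delta>\<^sup>2) * e x) = 0"
    proof (rule ibp[OF he])
      show "continuous_on UNIV (\<lambda>x. - (((x - a) \<bullet> c) / \<delta>\<^sup>2) * e x)" using ec dne by (intro continuous_intros) auto
      show "integrable lborel e" by (rule ie)
      show "integrable lborel (\<lambda>x. - (((x - a) \<bullet> c) / \<delta>\<^sup>2) * e x)"
        by (rule IP) (use pbd_c cont_c dne in \<open>auto intro!: pbd_minus pbd_divide continuous_intros\<close>)
    qed
    have ic: "integrable lborel (\<lambda>x. ((x - a) \<bullet> c) * e x)" by (rule IP[OF pbd_c cont_c])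
    have ec0: "integral\<^sup>L lborel (\<lambda>x. ((x - a) \<bullet> c) * e x) = 0"
    proof -
      have "integral\<^sup>L lborel (\<lambda>x. (- 1 / \<delta>\<^sup>2) * (((x - a) \<bullet> c) * e x)) = 0"
        using ibp2 by (simp only: helper2)
      then show ?thesis using dne by simp
    qed
    have e1: "integral\<^sup>L lborel e = 1 / N2"
    proof -
      have "integral\<^sup>L lborel (\<lambda>x. N2 * e x) = 1" using rho_integral[OF dne, of q0] unfolding rho_e .
      then show ?thesis using N2pos by (simp add: field_simps)
    qed
    have "integral\<^sup>L lborel (\<lambda>x. (P2 x + V' x / hb) * e x)
        = integral\<^sup>L lborel (\<lambda>x. ((pd \<bullet> c) / \<delta>) * e x + (- (hb / (4*\<delta>^4))) * (((x - a) \<bullet> c) * e x) + (1/hb) * (V' x * e x))"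
      unfolding P2_def by (simp add: algebra_simps)
    also have "\<dots> = ((pd \<bullet> c) / \<delta>) * integral\<^sup>L lborel e + (- (hb / (4*\<delta>^4))) * integral\<^sup>L lborel (\<lambda>x. ((x - a) \<bullet> c) * e x)
        + (1/hb) * integral\<^sup>L lborel (\<lambda>x. V' x * e x)"
      using ie ic i4 by (simp add: Bochner_Integration.integral_add)
    finally have s2: "((pd \<bullet> c) / \<delta>) / N2 + (1/hb) * integral\<^sup>L lborel (\<lambda>x. V' x * e x) = 0"
      using s1 ec0 e1 by simp
    have pdc: "pd \<bullet> c = - (\<delta> / hb) * (N2 * integral\<^sup>L lborel (\<lambda>x. V' x * e x))"
      using s2 N2pos dne hbne by (simp add: field_simps)
    have l2: "l2_inner (gwp_curve \<delta> \<theta> q p t) (\<lambda>x. complex_of_real (dirderiv c V x) * gwp_curve \<delta> \<theta> q p t x)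
        = complex_of_real (N2 * integral\<^sup>L lborel (\<lambda>x. V' x * e x))"
    proof -
      have pw: "cnj (u x) * (complex_of_real (V' x) * u x) = complex_of_real (N2 * (V' x * e x))" for x
      proof -
        have "cnj (u x) * (complex_of_real (V' x) * u x) = complex_of_real (V' x) * (cnj (u x) * u x)"
          by (simp add: mult_ac)
        also have "\<dots> = complex_of_real (N2 * (V' x * e x))" unfolding uu by simp
        finally show ?thesis .
      qed
      have "l2_inner u (\<lambda>x. complex_of_real (V' x) * u x) = integral\<^sup>L lborel (\<lambda>x. complex_of_real (N2 * (V' x * e x)))"
        unfolding l2_inner_def by (rule Bochner_Integration.integral_cong[OF refl pw])
      also have "\<dots> = complex_of_real (N2 * integral\<^sup>L lborel (\<lambda>x. V' x * e x))" by (simp only: integral_complex_of_real integral_mult_right_zero)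
      finally show ?thesis unfolding gc V'_def .
    qed
    show ?thesis unfolding l2 vp pdc by simp
  qed
  show ?thesis using part1 part2 by blast
qed

end
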